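(* Let $d\ge 3$, let $P\subset\mathbb{R}^d$ be a finite set of terminals, and let $T$ be an optimal Steiner tree of $P$. Let $\mathbf{s_1},\mathbf{s_2}$ be two Steiner points of $T$ joined by an edge of $T$. For a vertex $\mathbf{x}$ of $T$ let $N(\mathbf{x})$ denote the set of its neighbours in $T$, and put \[L_0=\min_{\mathbf{s}\in\{\mathbf{s_1},\mathbf{s_2}\}}\ \min_{\mathbf{v}\in N(\mathbf{s})\setminus\{\mathbf{s_1},\mathbf{s_2}\}}\|\mathbf{s}-\mathbf{v}\|.\] Then $\|\mathbf{s_1}-\mathbf{s_2}\|\ge\left(\frac{\sqrt6}{2}-1\right)L_0$.
   Context: For a finite set $P\subset\mathbb{R}^d$ (the terminals), a Steiner tree of $P$ is a tree whose vertex set is $P\cup S$ for some finite $S\subset\mathbb{R}^d$ (the Steiner points), each edge having length equal to the Euclidean distance between its endpoints; its cost is the sum of its edge lengths. An optimal Steiner tree of $P$ is a Steiner tree of minimum cost. By convention, optimal Steiner trees contain no trivial Steiner points, i.e. no Steiner point of degree $2$ that merely subdivides a straight segment. *)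

theory Defs
  imports "HOL-Analysis.Analysis"
begin

definition adj :: "'a set set \<Rightarrow> 'a \<Rightarrow> 'a \<Rightarrow> bool" where
  "adj E u v \<longleftrightarrow> {u, v} \<in> E"

definition nbrs :: "'a set set \<Rightarrow> 'a \<Rightarrow> 'a set" where
  "nbrs E x = {v. {x, v} \<in> E}"

definition graph_connected :: "'a set \<Rightarrow> 'a set set \<Rightarrow> bool" where
  "graph_connected V E \<longleftrightarrow> (\<forall>u\<in>V. \<forall>v\<in>V. (adj E)\<^sup>*\<^sup>* u v)"

text \<open>A tree: finite nonempty vertex set, edges are pairs of distinct vertices,
  connected, and acyclic (every edge is a bridge, i.e. removing it disconnects).\<close>
definition is_tree :: "'a set \<Rightarrow> 'a set set \<Rightarrow> bool" where
  "is_tree V E \<longleftrightarrow> finite V \<and> V \<noteq> {} \<and>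
     (\<forall>e\<in>E. \<exists>u v. u \<noteq> v \<and> u \<in> V \<and> v \<in> V \<and> e = {u, v}) \<and>
     graph_connected V E \<and>
     (\<forall>e\<in>E. \<not> graph_connected V (E - {e}))"

definition edge_len :: "'a::metric_space set \<Rightarrow> real" where
  "edge_len e = (SOME l. \<exists>u v. e = {u, v} \<and> l = dist u v)"

definition tree_cost :: "'a::metric_space set set \<Rightarrow> real" where
  "tree_cost E = (\<Sum>e\<in>E. edge_len e)"

text \<open>A Steiner tree of the terminal set P: a tree whose vertex set contains P;
  the Steiner points are the vertices outside P.\<close>
definition steiner_tree :: "'a::euclidean_space set \<Rightarrow> 'a set \<Rightarrow> 'a set set \<Rightarrow> bool" where
  "steiner_tree P V E \<longleftrightarrow> finite P \<and> P \<subseteq> V \<and> is_tree V E"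

definition trivial_steiner_point :: "'a::euclidean_space set \<Rightarrow> 'a set \<Rightarrow> 'a set set \<Rightarrow> 'a \<Rightarrow> bool" where
  "trivial_steiner_point P V E s \<longleftrightarrow> s \<in> V - P \<and>
     (\<exists>u w. u \<noteq> w \<and> nbrs E s = {u, w} \<and> s \<in> open_segment u w)"

definition optimal_steiner_tree :: "'a::euclidean_space set \<Rightarrow> 'a set \<Rightarrow> 'a set set \<Rightarrow> bool" where
  "optimal_steiner_tree P V E \<longleftrightarrow> steiner_tree P V E \<and>
     (\<forall>V' E'. steiner_tree P V' E' \<longrightarrow> tree_cost E \<le> tree_cost E') \<and>
     (\<forall>s. \<not> trivial_steiner_point P V E s)"

end

theory Submission
  imports Defs "HOL-Analysis.Analysis"
begin


definition valid_edges :: "'a set \<Rightarrow> 'a set set \<Rightarrow> bool" where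
  "valid_edges V E \<longleftrightarrow> (\<forall>e\<in>E. \<exists>u v. u \<noteq> v \<and> u \<in> V \<and> v \<in> V \<and> e = {u, v})"

lemma adj_sym: "adj E x y = adj E y x"
  by (simp add: adj_def insert_commute)

lemma rtc_sym: "(adj E)\<^sup>*\<^sup>* x y \<Longrightarrow> (adj E)\<^sup>*\<^sup>* y x"
proof (induction rule: rtranclp_induct)
  case base then show ?case by simp
next
  case (step y z)
  then show ?case using adj_sym[of E y z]
    by (meson converse_rtranclp_into_rtranclp)
qed

lemma rtc_mono: "E \<subseteq> E' \<Longrightarrow> (adj E)\<^sup>*\<^sup>* x y \<Longrightarrow> (adj E')\<^sup>*\<^sup>* x y"
proof -
  assume "E \<subseteq> E'"
  then have "adj E \<le> adj E'" by (auto simp: adj_def)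
  then have "(adj E)\<^sup>*\<^sup>* \<le> (adj E')\<^sup>*\<^sup>*" by (rule rtranclp_mono)
  then show "(adj E)\<^sup>*\<^sup>* x y \<Longrightarrow> (adj E')\<^sup>*\<^sup>* x y" by blast
qed

lemma conn_root:
  assumes "r \<in> V" "\<forall>x\<in>V. (adj E)\<^sup>*\<^sup>* r x"
  shows "graph_connected V E"
  unfolding graph_connected_def
  by (meson assms rtc_sym rtranclp_trans)

lemma valid_finite: "finite V \<Longrightarrow> valid_edges V E \<Longrightarrow> finite E"
proof -
  assume "finite V" "valid_edges V E"
  have "E \<subseteq> Pow V"
  proof
    fix e assume "e \<in> E"
    then obtain u v where "u \<in> V" "v \<in> V" "e = {u, v}" using \<open>valid_edges V E\<close> unfolding valid_edges_def by blast
    then show "e \<in> Pow V" by simp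
  qed
  then show "finite E" using \<open>finite V\<close> by (meson finite_Pow_iff finite_subset)
qed

lemma adj_valid: "valid_edges V E \<Longrightarrow> adj E x y \<Longrightarrow> x \<in> V \<and> y \<in> V \<and> x \<noteq> y"
  unfolding valid_edges_def adj_def
  by (smt (verit, best) doubleton_eq_iff)

lemma rtc_in_V: "(adj E)\<^sup>*\<^sup>* x y \<Longrightarrow> valid_edges V E \<Longrightarrow> x \<in> V \<Longrightarrow> y \<in> V"
proof (induction rule: rtranclp_induct)
  case base then show ?case by simp
next
  case (step y z) then show ?case using adj_valid[of V E y z] by simp
qed

lemma valid_obt: "valid_edges V E \<Longrightarrow> f \<in> E \<Longrightarrow> \<exists>u v. u \<noteq> v \<and> u \<in> V \<and> v \<in> V \<and> f = {u, v}"
  unfolding valid_edges_def by (rule bspec)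

lemma valid_nonempty: "valid_edges V E \<Longrightarrow> {} \<notin> E"
proof
  assume "valid_edges V E" "{} \<in> E"
  then have "\<exists>u v. u \<noteq> v \<and> u \<in> V \<and> v \<in> V \<and> {} = {u, v}" by (rule valid_obt)
  then show False by auto
qed

lemma valid_subV: "valid_edges V E \<Longrightarrow> f \<in> E \<Longrightarrow> f \<subseteq> V"
proof -
  assume "valid_edges V E" "f \<in> E"
  then obtain u v where "u \<in> V" "v \<in> V" "f = {u, v}" unfolding valid_edges_def by blast
  then show ?thesis by simp
qed

lemma valid_sub: "valid_edges V E \<Longrightarrow> E' \<subseteq> E \<Longrightarrow> (\<forall>f\<in>E'. f \<subseteq> X) \<Longrightarrow> valid_edges X E'"
  unfolding valid_edges_def
proof
  fix e assume a: "\<forall>e\<in>E. \<exists>u v. u \<noteq> v \<and> u \<in> V \<and> v \<in> V \<and> e = {u, v}" "E' \<subseteq> E" "\<forall>f\<in>E'. f \<subseteq> X" "e \<in> E'"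
  then have "e \<in> E" by (meson subsetD)
  then obtain u v where uv: "u \<noteq> v" "e = {u, v}" using a(1) by meson
  moreover have "e \<subseteq> X" using a(3,4) by (rule bspec)
  ultimately have "u \<in> X" "v \<in> X" by simp_all
  then show "\<exists>u v. u \<noteq> v \<and> u \<in> X \<and> v \<in> X \<and> e = {u, v}" using uv by (intro exI[of _ u] exI[of _ v]) simp
qed

lemma bridge_split:
  assumes val: "valid_edges V E" and conn: "graph_connected V E"
    and e: "e \<in> E" "e = {u, v}" "u \<in> V" "v \<in> V"
    and nc: "\<not> graph_connected V (E - {e})"
  assumes X_def: "X = {x\<in>V. (adj (E - {e}))\<^sup>*\<^sup>* u x}"
    and Y_def: "Y = {x\<in>V. (adj (E - {e}))\<^sup>*\<^sup>* v x}"
    and EA_def: "EA = {f\<in>E - {e}. f \<subseteq> X}"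
    and EB_def: "EB = {f\<in>E - {e}. f \<subseteq> Y}"
  shows "V = X \<union> Y" "X \<inter> Y = {}" "u \<in> X" "v \<in> Y"
    "E - {e} = EA \<union> EB" "EA \<inter> EB = {}"
    "valid_edges X EA" "valid_edges Y EB"
    "graph_connected X EA" "graph_connected Y EB"
    "\<And>f. f \<in> EA \<Longrightarrow> graph_connected X (EA - {f}) \<Longrightarrow> graph_connected V (E - {f})"
    "\<And>f. f \<in> EB \<Longrightarrow> graph_connected Y (EB - {f}) \<Longrightarrow> graph_connected V (E - {f})"
proof -
  let ?R = "(adj (E - {e}))\<^sup>*\<^sup>*"
  have valE': "valid_edges V (E - {e})" using val by (rule valid_sub) (use val valid_subV in blast)+
  have cover: "?R u x \<or> ?R v x" if "x \<in> V" for x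
  proof -
    have "(adj E)\<^sup>*\<^sup>* u x" using conn e that unfolding graph_connected_def by blast
    then show ?thesis
    proof (induction rule: rtranclp_induct)
      case base then show ?case by simp
    next
      case (step y z)
      show ?case
      proof (cases "{y, z} = e")
        case True
        then have "z = u \<or> z = v" using e by (auto simp: doubleton_eq_iff)
        then show ?thesis by auto
      next
        case False
        then have "adj (E - {e}) y z" using step.hyps(2) by (auto simp: adj_def)
        then show ?thesis using step.IH by (meson rtranclp.rtrancl_into_rtrancl)
      qed
    qed
  qed
  show XY: "V = X \<union> Y" using cover unfolding X_def Y_def by blast
  show disj: "X \<inter> Y = {}"
  proof (rule ccontr)
    assume "X \<inter> Y \<noteq> {}"
    then obtain z where z: "?R u z" "?R v z" unfolding X_def Y_def by blast
    then have uv: "?R u v" by (meson rtc_sym rtranclp_trans)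
    have "?R u x" if "x \<in> V" for x using cover[OF that] uv by (meson rtranclp_trans)
    then have "graph_connected V (E - {e})" using conn_root[of u V] e by blast
    then show False using nc by blast
  qed
  show uX: "u \<in> X" using e unfolding X_def by simp
  show vY: "v \<in> Y" using e unfolding Y_def by simp
  have closed: "(x \<in> X \<longleftrightarrow> y \<in> X) \<and> (x \<in> Y \<longleftrightarrow> y \<in> Y)" if "adj (E - {e}) x y" for x y
  proof -
    have "x \<in> V" "y \<in> V" using adj_valid[OF valE' that] by auto
    moreover have "adj (E - {e}) y x" using adj_sym[of "E - {e}" x y] that by simp
    ultimately have yx: "adj (E - {e}) y x" and xV: "x \<in> V" and yV: "y \<in> V" by auto
    have 1: "?R w y" if "?R w x" for w using that \<open>adj (E - {e}) x y\<close> by (rule rtranclp.rtrancl_into_rtrancl)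
    have 2: "?R w x" if "?R w y" for w using that yx by (rule rtranclp.rtrancl_into_rtrancl)
    have "x \<in> X \<longleftrightarrow> y \<in> X" unfolding X_def using 1[of u] 2[of u] xV yV by blast
    moreover have "x \<in> Y \<longleftrightarrow> y \<in> Y" unfolding Y_def using 1[of v] 2[of v] xV yV by blast
    ultimately show ?thesis by blast
  qed
  have edge_side: "f \<subseteq> X \<or> f \<subseteq> Y" if fE: "f \<in> E - {e}" for f
  proof -
    obtain x y where xy: "f = {x, y}" "x \<in> V" "y \<in> V" using valid_obt[OF valE' fE] by blast
    then have "adj (E - {e}) x y" using fE by (simp add: adj_def)
    then have c: "(x \<in> X \<longleftrightarrow> y \<in> X) \<and> (x \<in> Y \<longleftrightarrow> y \<in> Y)" by (rule closed)
    have "x \<in> X \<or> x \<in> Y" using xy(2) XY by blast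
    then show ?thesis using c xy(1) by blast
  qed
  show "E - {e} = EA \<union> EB"
  proof
    show "E - {e} \<subseteq> EA \<union> EB" using edge_side unfolding EA_def EB_def by blast
    show "EA \<union> EB \<subseteq> E - {e}" unfolding EA_def EB_def by blast
  qed
  show "EA \<inter> EB = {}"
  proof -
    have "f = {}" if "f \<in> EA" "f \<in> EB" for f using that disj unfolding EA_def EB_def by blast
    moreover have "{} \<notin> E" using val by (rule valid_nonempty)
    ultimately show ?thesis unfolding EA_def by blast
  qed
  show "valid_edges X EA" using valE' by (rule valid_sub) (auto simp: EA_def)
  show "valid_edges Y EB" using valE' by (rule valid_sub) (auto simp: EB_def)
  have reachX: "(adj EA)\<^sup>*\<^sup>* u x \<and> x \<in> X" if "?R u x" for x
    using that
  proof (induction rule: rtranclp_induct)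
    case base then show ?case using uX by simp
  next
    case (step y z)
    have "z \<in> X" using closed[OF step.hyps(2)] step.IH by blast
    then have "adj EA y z" using step.hyps(2) step.IH unfolding adj_def EA_def by auto
    then show ?case using step.IH \<open>z \<in> X\<close> by (meson rtranclp.rtrancl_into_rtrancl)
  qed
  show "graph_connected X EA"
    by (rule conn_root[of u]) (use uX reachX in \<open>auto simp: X_def\<close>)
  have reachY: "(adj EB)\<^sup>*\<^sup>* v x \<and> x \<in> Y" if "?R v x" for x
    using that
  proof (induction rule: rtranclp_induct)
    case base then show ?case using vY by simp
  next
    case (step y z)
    have "z \<in> Y" using closed[OF step.hyps(2)] step.IH by blast
    then have "adj EB y z" using step.hyps(2) step.IH unfolding adj_def EB_def by auto
    then show ?case using step.IH \<open>z \<in> Y\<close> by (meson rtranclp.rtrancl_into_rtrancl)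
  qed
  show "graph_connected Y EB"
    by (rule conn_root[of v]) (use vY reachY in \<open>auto simp: Y_def\<close>)
  have adje: "adj (E - {f}) u v" if "f \<noteq> e" for f using e that by (auto simp: adj_def)
  show "graph_connected V (E - {f})" if f: "f \<in> EA" "graph_connected X (EA - {f})" for f
  proof (rule conn_root[of u])
    show "u \<in> V" by fact
    have fe: "f \<noteq> e" using f unfolding EA_def by blast
    have sub1: "EA - {f} \<subseteq> E - {f}" unfolding EA_def by blast
    have sub2: "EB \<subseteq> E - {f}" using f \<open>EA \<inter> EB = {}\<close> unfolding EB_def by blast
    show "\<forall>x\<in>V. (adj (E - {f}))\<^sup>*\<^sup>* u x"
    proof
      fix x assume "x \<in> V"
      then consider "x \<in> X" | "x \<in> Y" using XY by blast
      then show "(adj (E - {f}))\<^sup>*\<^sup>* u x"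
      proof cases
        case 1
        then have "(adj (EA - {f}))\<^sup>*\<^sup>* u x" using f(2) uX unfolding graph_connected_def by blast
        then show ?thesis using rtc_mono[OF sub1] by blast
      next
        case 2
        then have "(adj EB)\<^sup>*\<^sup>* v x" using reachY unfolding Y_def by blast
        then have "(adj (E - {f}))\<^sup>*\<^sup>* v x" using rtc_mono[OF sub2] by blast
        then show ?thesis using adje[OF fe] by (meson converse_rtranclp_into_rtranclp)
      qed
    qed
  qed
  show "graph_connected V (E - {f})" if f: "f \<in> EB" "graph_connected Y (EB - {f})" for f
  proof (rule conn_root[of v])
    show "v \<in> V" by fact
    have fe: "f \<noteq> e" using f unfolding EB_def by blast
    have sub1: "EB - {f} \<subseteq> E - {f}" unfolding EB_def by blast
    have sub2: "EA \<subseteq> E - {f}" using f \<open>EA \<inter> EB = {}\<close> unfolding EA_def by blast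
    show "\<forall>x\<in>V. (adj (E - {f}))\<^sup>*\<^sup>* v x"
    proof
      fix x assume "x \<in> V"
      then consider "x \<in> Y" | "x \<in> X" using XY by blast
      then show "(adj (E - {f}))\<^sup>*\<^sup>* v x"
      proof cases
        case 1
        then have "(adj (EB - {f}))\<^sup>*\<^sup>* v x" using f(2) vY unfolding graph_connected_def by blast
        then show ?thesis using rtc_mono[OF sub1] by blast
      next
        case 2
        then have "(adj EA)\<^sup>*\<^sup>* u x" using reachX unfolding X_def by blast
        then have "(adj (E - {f}))\<^sup>*\<^sup>* u x" using rtc_mono[OF sub2] by blast
        then show ?thesis using adje[OF fe] adj_sym by (metis converse_rtranclp_into_rtranclp)
      qed
    qed
  qed
qed


lemma conn_empty: "graph_connected V {} \<Longrightarrow> x \<in> V \<Longrightarrow> y \<in> V \<Longrightarrow> x = y"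
proof -
  assume "graph_connected V {}" "x \<in> V" "y \<in> V"
  then have "(adj {})\<^sup>*\<^sup>* x y" unfolding graph_connected_def by blast
  then show "x = y" by (induction rule: rtranclp_induct) (auto simp: adj_def)
qed

lemma is_tree_alt: "is_tree V E \<longleftrightarrow> finite V \<and> V \<noteq> {} \<and> valid_edges V E \<and> graph_connected V E \<and>
     (\<forall>e\<in>E. \<not> graph_connected V (E - {e}))"
  by (simp only: is_tree_def valid_edges_def)

lemma count_aux:
  "\<forall>V E. card E = n \<longrightarrow> finite V \<longrightarrow> V \<noteq> {} \<longrightarrow> valid_edges V E \<longrightarrow> graph_connected V E \<longrightarrow>
     card V \<le> card E + 1 \<and> ((\<forall>e\<in>E. \<not> graph_connected V (E - {e})) \<longrightarrow> card E + 1 \<le> card V)"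
proof (induction n rule: less_induct)
  case (less n)
  show ?case
  proof (intro allI impI)
    fix V :: "'a set" and E
    assume cE: "card E = n" and fV: "finite V" and ne: "V \<noteq> {}" and val: "valid_edges V E"
      and conn: "graph_connected V E"
    have fE: "finite E" using fV val by (rule valid_finite)
    show "card V \<le> card E + 1 \<and> ((\<forall>e\<in>E. \<not> graph_connected V (E - {e})) \<longrightarrow> card E + 1 \<le> card V)"
    proof (cases "E = {}")
      case True
      have c0: "graph_connected V {}" using conn True by simp
      have "\<forall>x\<in>V. \<forall>y\<in>V. x = y" using conn_empty[OF c0] by blast
      then have "card V \<le> 1" using card_le_Suc0_iff_eq[OF fV] by simp
      moreover have "card V \<ge> 1" using ne fV by (simp add: Suc_leI card_gt_0_iff)
      ultimately show ?thesis using True by simp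
    next
      case False
      have split_case: "card V = card E + 1"
        if allb: "\<forall>e\<in>E. \<not> graph_connected V (E - {e})"
      proof -
        obtain e where eE: "e \<in> E" using False by blast
        obtain u v where uv: "u \<noteq> v" "u \<in> V" "v \<in> V" "e = {u, v}"
          using valid_obt[OF val eE] by blast
        define X where "X = {x\<in>V. (adj (E - {e}))\<^sup>*\<^sup>* u x}"
        define Y where "Y = {x\<in>V. (adj (E - {e}))\<^sup>*\<^sup>* v x}"
        define EA where "EA = {f\<in>E - {e}. f \<subseteq> X}"
        define EB where "EB = {f\<in>E - {e}. f \<subseteq> Y}"
        have nc: "\<not> graph_connected V (E - {e})" using allb eE by blast
        note S = bridge_split[OF val conn eE uv(4) uv(2) uv(3) nc X_def Y_def EA_def EB_def]
        have fX: "finite X" "finite Y" using fV S(1) by auto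
        have fEA: "finite EA" "finite EB" using fE unfolding EA_def EB_def by auto
        have cEe: "card (E - {e}) = card EA + card EB"
          using S(5) S(6) fEA card_Un_disjoint by metis
        have cE1: "card E = card (E - {e}) + 1"
          using card.remove[OF fE eE] by simp
        have ltA: "card EA < n" and ltB: "card EB < n" using cEe cE1 cE by auto
        have minA: "\<forall>f\<in>EA. \<not> graph_connected X (EA - {f})" using S(11) allb S(5) by blast
        have minB: "\<forall>f\<in>EB. \<not> graph_connected Y (EB - {f})" using S(12) allb S(5) by blast
        have IA: "card X \<le> card EA + 1 \<and> card EA + 1 \<le> card X"
          using less.IH[OF ltA, rule_format, OF refl fX(1) _ S(7) S(9)] S(3) minA by blast
        have IB: "card Y \<le> card EB + 1 \<and> card EB + 1 \<le> card Y"
          using less.IH[OF ltB, rule_format, OF refl fX(2) _ S(8) S(10)] S(4) minB by blast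
        have "card V = card X + card Y" using S(1) S(2) fX card_Un_disjoint by metis
        then show ?thesis using IA IB cEe cE1 by linarith
      qed
      show ?thesis
      proof (cases "\<forall>e\<in>E. \<not> graph_connected V (E - {e})")
        case True
        then show ?thesis using split_case by simp
      next
        case nb: False
        then obtain e where eE: "e \<in> E" and ce: "graph_connected V (E - {e})" by blast
        have lt: "card (E - {e}) < n" using cE card.remove[OF fE eE] by simp
        have val': "valid_edges V (E - {e})" using val by (rule valid_sub) (use val valid_subV in blast)+
        have "card V \<le> card (E - {e}) + 1"
          using less.IH[OF lt, rule_format, OF refl fV ne val' ce] by blast
        moreover have "card (E - {e}) \<le> card E" using fE by (simp add: card_mono)
        ultimately show ?thesis using nb by auto
      qed
    qed
  qed
qed

lemma conn_card:
  "finite V \<Longrightarrow> V \<noteq> {} \<Longrightarrow> valid_edges V E \<Longrightarrow> graph_connected V E \<Longrightarrow> card V \<le> card E + 1"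
  using count_aux by blast

lemma tree_card:
  "is_tree V E \<Longrightarrow> card E + 1 = card V"
proof -
  assume t: "is_tree V E"
  then have a: "finite V" "V \<noteq> {}" "valid_edges V E" "graph_connected V E"
     "\<forall>e\<in>E. \<not> graph_connected V (E - {e})" unfolding is_tree_alt by blast+
  have "card V \<le> card E + 1 \<and> ((\<forall>e\<in>E. \<not> graph_connected V (E - {e})) \<longrightarrow> card E + 1 \<le> card V)"
    using count_aux a(1-4) by blast
  then show ?thesis using a(5) by linarith
qed

lemma tree_iff:
  "is_tree V E \<longleftrightarrow> finite V \<and> V \<noteq> {} \<and> valid_edges V E \<and> graph_connected V E \<and> card E + 1 = card V"
proof
  assume t: "is_tree V E"
  show "finite V \<and> V \<noteq> {} \<and> valid_edges V E \<and> graph_connected V E \<and> card E + 1 = card V"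
    using t tree_card[OF t] unfolding is_tree_alt by blast
next
  assume a: "finite V \<and> V \<noteq> {} \<and> valid_edges V E \<and> graph_connected V E \<and> card E + 1 = card V"
  have fV: "finite V" and val: "valid_edges V E" and cn: "card E + 1 = card V" using a by blast+
  have fE: "finite E" using fV val by (rule valid_finite)
  have "\<not> graph_connected V (E - {e})" if eE: "e \<in> E" for e
  proof
    assume c: "graph_connected V (E - {e})"
    have val': "valid_edges V (E - {e})" using val by (rule valid_sub) (use val valid_subV in blast)+
    have "card V \<le> card (E - {e}) + 1" using conn_card fV a val' c by blast
    moreover have "card (E - {e}) + 1 = card E" using card.remove[OF fE eE] by simp
    ultimately show False using cn by simp
  qed
  then show "is_tree V E" using a unfolding is_tree_alt by blast
qed


lemma lift_path:
  assumes "\<forall>x y. {x, y} \<in> E \<longrightarrow> (adj E')\<^sup>*\<^sup>* (f x) (f y)"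
  shows "(adj E)\<^sup>*\<^sup>* x y \<Longrightarrow> (adj E')\<^sup>*\<^sup>* (f x) (f y)"
proof (induction rule: rtranclp_induct)
  case base then show ?case by simp
next
  case (step y z)
  then have "{y, z} \<in> E" by (simp add: adj_def)
  then have "(adj E')\<^sup>*\<^sup>* (f y) (f z)" using assms by blast
  then show ?case using step.IH by (rule rtranclp_trans[rotated])
qed

lemma conn_map:
  assumes "graph_connected V E"
    and lift: "\<forall>x y. {x, y} \<in> E \<longrightarrow> (adj E')\<^sup>*\<^sup>* (f x) (f y)"
    and reach: "\<forall>v\<in>V'. \<exists>x\<in>V. (adj E')\<^sup>*\<^sup>* (f x) v"
  shows "graph_connected V' E'"
  unfolding graph_connected_def
proof (intro ballI)
  fix v1 v2 assume "v1 \<in> V'" "v2 \<in> V'"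
  then obtain x1 x2 where x: "x1 \<in> V" "x2 \<in> V" "(adj E')\<^sup>*\<^sup>* (f x1) v1" "(adj E')\<^sup>*\<^sup>* (f x2) v2"
    using reach by meson
  have "(adj E)\<^sup>*\<^sup>* x1 x2" using assms(1) x(1,2) unfolding graph_connected_def by blast
  then have "(adj E')\<^sup>*\<^sup>* (f x1) (f x2)" using lift_path[OF lift] by blast
  then show "(adj E')\<^sup>*\<^sup>* v1 v2" using x(3,4) by (meson rtc_sym rtranclp_trans)
qed

lemma tree_mod:
  assumes t: "is_tree V E" and fV': "finite V'" and val': "valid_edges V' E'"
    and cards: "card E' + card V = card E + card V'"
    and img: "f ` V \<subseteq> V'"
    and lift: "\<forall>x y. {x, y} \<in> E \<longrightarrow> (adj E')\<^sup>*\<^sup>* (f x) (f y)"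
    and reach: "\<forall>v\<in>V'. \<exists>x\<in>V. (adj E')\<^sup>*\<^sup>* (f x) v"
  shows "is_tree V' E'"
proof -
  have a: "finite V" "V \<noteq> {}" "valid_edges V E" "graph_connected V E" "card E + 1 = card V"
    using t unfolding tree_iff by blast+
  have "V' \<noteq> {}" using a(2) img by blast
  moreover have "graph_connected V' E'" using conn_map[OF a(4) lift reach] .
  moreover have "card E' + 1 = card V'" using cards a(5) by simp
  ultimately show ?thesis unfolding tree_iff using fV' val' by blast
qed

lemma edge_len_eq: "edge_len {x, y} = dist x y"
  unfolding edge_len_def
proof (rule some_equality)
  show "\<exists>u v. {x, y} = {u, v} \<and> dist x y = dist u v" by blast
next
  fix l assume "\<exists>u v. {x, y} = {u, v} \<and> l = dist u v"
  then obtain u v where "{x, y} = {u, v}" "l = dist u v" by blast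
  then show "l = dist x y" by (auto simp: doubleton_eq_iff dist_commute)
qed

lemma cost_replace:
  assumes "finite E" "finite A" "R \<subseteq> E" "(E - R) \<inter> A = {}"
  shows "tree_cost ((E - R) \<union> A) + tree_cost R = tree_cost E + tree_cost A"
proof -
  have fR: "finite R" using assms(1,3) by (rule finite_subset[rotated])
  have "tree_cost ((E - R) \<union> A) = tree_cost (E - R) + tree_cost A"
    unfolding tree_cost_def using assms by (intro sum.union_disjoint) auto
  moreover have "tree_cost E = tree_cost (E - R) + tree_cost R"
    unfolding tree_cost_def using sum.subset_diff[OF assms(3) assms(1)] by simp
  ultimately show ?thesis by simp
qed

lemma cost_star:
  assumes "finite N" "s \<notin> N"
  shows "tree_cost ((\<lambda>n. {s, n}) ` N) = (\<Sum>n\<in>N. dist s n)"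
proof -
  have "inj_on (\<lambda>n. {s, n}) N"
    by (rule inj_onI) (use assms(2) in \<open>auto simp: doubleton_eq_iff\<close>)
  then show ?thesis unfolding tree_cost_def by (simp add: sum.reindex edge_len_eq)
qed

lemma card_star:
  assumes "s \<notin> N"
  shows "card ((\<lambda>n. {s, n}) ` N) = card N"
proof -
  have "inj_on (\<lambda>n. {s, n}) N"
    by (rule inj_onI) (use assms in \<open>auto simp: doubleton_eq_iff\<close>)
  then show ?thesis by (rule card_image)
qed

lemma nbrs_sub: "valid_edges V E \<Longrightarrow> s \<in> V \<Longrightarrow> nbrs E s \<subseteq> V - {s}"
proof
  fix n assume val: "valid_edges V E" and "s \<in> V" and n: "n \<in> nbrs E s"
  then have "{s, n} \<in> E" by (simp add: nbrs_def)
  then have "\<exists>u v. u \<noteq> v \<and> u \<in> V \<and> v \<in> V \<and> {s, n} = {u, v}" using val by (rule valid_obt[rotated])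
  then obtain u v where "u \<noteq> v" "u \<in> V" "v \<in> V" "{s, n} = {u, v}" by blast
  then show "n \<in> V - {s}" by (auto simp: doubleton_eq_iff)
qed

lemma star_edges:
  assumes "valid_edges V E"
  shows "{e \<in> E. s \<in> e} = (\<lambda>n. {s, n}) ` nbrs E s"
proof
  show "{e \<in> E. s \<in> e} \<subseteq> (\<lambda>n. {s, n}) ` nbrs E s"
  proof
    fix e assume e: "e \<in> {e \<in> E. s \<in> e}"
    then have "\<exists>u v. u \<noteq> v \<and> u \<in> V \<and> v \<in> V \<and> e = {u, v}" using assms valid_obt by blast
    then obtain u v where uv: "e = {u, v}" by blast
    show "e \<in> (\<lambda>n. {s, n}) ` nbrs E s"
    proof (cases "s = u")
      case True
      then have "v \<in> nbrs E s" using e uv by (simp add: nbrs_def)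
      then show ?thesis using uv True by blast
    next
      case False
      then have "s = v" using e uv by auto
      then have "u \<in> nbrs E s" using e uv by (simp add: nbrs_def insert_commute)
      then show ?thesis using uv \<open>s = v\<close> by (auto simp: insert_commute)
    qed
  qed
  show "(\<lambda>n. {s, n}) ` nbrs E s \<subseteq> {e \<in> E. s \<in> e}" by (auto simp: nbrs_def)
qed


lemma opt_facts:
  assumes "optimal_steiner_tree P V E"
  shows "is_tree V E" "finite P" "P \<subseteq> V"
    "\<And>V' E'. P \<subseteq> V' \<Longrightarrow> is_tree V' E' \<Longrightarrow> tree_cost E \<le> tree_cost E'"
    "\<And>s. \<not> trivial_steiner_point P V E s"
  using assms unfolding optimal_steiner_tree_def steiner_tree_def by blast+

lemma tree_facts:
  assumes "is_tree V E"
  shows "finite V" "valid_edges V E" "finite E"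
  using assms unfolding tree_iff by (blast, blast, meson valid_finite)

lemma move_ineq:
  fixes P V :: "'a::euclidean_space set"
  assumes opt: "optimal_steiner_tree P V E" and s: "s \<in> V" "s \<notin> P" and x: "x \<notin> V"
  shows "(\<Sum>n\<in>nbrs E s. dist s n) \<le> (\<Sum>n\<in>nbrs E s. dist x n)"
proof -
  note O = opt_facts[OF opt]
  note T = tree_facts[OF O(1)]
  define N where "N = nbrs E s"
  have NV: "N \<subseteq> V - {s}" unfolding N_def using nbrs_sub[OF T(2) s(1)] .
  have fN: "finite N" using NV T(1) by (meson finite_Diff finite_subset)
  have sN: "s \<notin> N" and xN: "x \<notin> N" using NV x by auto
  define R where "R = {e \<in> E. s \<in> e}"
  have R: "R = (\<lambda>n. {s, n}) ` N" unfolding R_def N_def by (rule star_edges[OF T(2)])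
  define A where "A = (\<lambda>n. {x, n}) ` N"
  define E' where "E' = (E - R) \<union> A"
  define V' where "V' = insert x (V - {s})"
  define f where "f = (\<lambda>y. if y = s then x else y)"
  have EV: "e \<subseteq> V" if "e \<in> E" for e using valid_subV[OF T(2) that] .
  have RE: "R \<subseteq> E" unfolding R_def by blast
  have fA: "finite A" unfolding A_def using fN by simp
  have disj: "(E - R) \<inter> A = {}"
  proof -
    have "x \<in> e" if "e \<in> A" for e using that unfolding A_def by auto
    moreover have "x \<notin> e" if "e \<in> E" for e using EV[OF that] x by blast
    ultimately show ?thesis by blast
  qed
  have val': "valid_edges V' E'"
    unfolding valid_edges_def
  proof
    fix e assume "e \<in> E'"
    then consider "e \<in> E - R" | "e \<in> A" unfolding E'_def by blast
    then show "\<exists>u v. u \<noteq> v \<and> u \<in> V' \<and> v \<in> V' \<and> e = {u, v}"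
    proof cases
      case 1
      then have "\<exists>u v. u \<noteq> v \<and> u \<in> V \<and> v \<in> V \<and> e = {u, v}" using valid_obt[OF T(2)] by blast
      then obtain u v where uv: "u \<noteq> v" "u \<in> V" "v \<in> V" "e = {u, v}" by blast
      have "s \<notin> e" using 1 unfolding R_def by blast
      then have "u \<in> V'" "v \<in> V'" using uv unfolding V'_def by auto
      then show ?thesis using uv by (intro exI[of _ u] exI[of _ v]) simp
    next
      case 2
      then obtain n where n: "n \<in> N" "e = {x, n}" unfolding A_def by blast
      then have "x \<noteq> n" "x \<in> V'" "n \<in> V'" using NV xN unfolding V'_def by auto
      then show ?thesis using n by (intro exI[of _ x] exI[of _ n]) simp
    qed
  qed
  have fV': "finite V'" unfolding V'_def using T(1) by simp
  have cR: "card R = card N" unfolding R using card_star[OF sN] .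
  have cA: "card A = card N" unfolding A_def using card_star[OF xN] .
  have fR: "finite R" using RE T(3) by (rule finite_subset)
  have cER: "card (E - R) + card R = card E"
    using card_Diff_subset[OF fR RE] card_mono[OF T(3) RE] by simp
  have cE': "card E' = card (E - R) + card A"
    unfolding E'_def using disj fA T(3) by (simp add: card_Un_disjoint)
  have cV': "card V' = card V"
  proof -
    have "x \<notin> V - {s}" using x by blast
    then have "card V' = Suc (card (V - {s}))" unfolding V'_def using T(1) by simp
    also have "\<dots> = card V" using card.remove[OF T(1) s(1)] by simp
    finally show ?thesis .
  qed
  have cards: "card E' + card V = card E + card V'" using cER cE' cR cA cV' by simp
  have img: "f ` V \<subseteq> V'" unfolding f_def V'_def by auto
  have lift: "\<forall>y z. {y, z} \<in> E \<longrightarrow> (adj E')\<^sup>*\<^sup>* (f y) (f z)"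
  proof (intro allI impI)
    fix y z assume yz: "{y, z} \<in> E"
    have "adj E' (f y) (f z)"
    proof (cases "y = s \<or> z = s")
      case True
      then show ?thesis
      proof
        assume ys: "y = s"
        then have "z \<in> N" using yz unfolding N_def nbrs_def by simp
        then have "z \<noteq> s" using sN by blast
        then have "{f y, f z} = {x, z}" using ys unfolding f_def by simp
        moreover have "{x, z} \<in> A" using \<open>z \<in> N\<close> unfolding A_def by blast
        ultimately show ?thesis unfolding adj_def E'_def by simp
      next
        assume zs: "z = s"
        then have "y \<in> N" using yz unfolding N_def nbrs_def by (simp add: insert_commute)
        then have "y \<noteq> s" using sN by blast
        then have "{f y, f z} = {x, y}" using zs unfolding f_def by (simp add: insert_commute)
        moreover have "{x, y} \<in> A" using \<open>y \<in> N\<close> unfolding A_def by blast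
        ultimately show ?thesis unfolding adj_def E'_def by simp
      qed
    next
      case False
      then have "{y, z} \<in> E - R" using yz unfolding R_def by auto
      moreover have "f y = y" "f z = z" using False unfolding f_def by auto
      ultimately show ?thesis unfolding adj_def E'_def by simp
    qed
    then show "(adj E')\<^sup>*\<^sup>* (f y) (f z)" by (rule r_into_rtranclp)
  qed
  have reach: "\<forall>v\<in>V'. \<exists>y\<in>V. (adj E')\<^sup>*\<^sup>* (f y) v"
  proof
    fix v assume "v \<in> V'"
    then consider "v = x" | "v \<in> V - {s}" unfolding V'_def by blast
    then show "\<exists>y\<in>V. (adj E')\<^sup>*\<^sup>* (f y) v"
    proof cases
      case 1 then show ?thesis using s(1) unfolding f_def by (intro bexI[of _ s]) auto
    next
      case 2 then show ?thesis unfolding f_def by (intro bexI[of _ v]) auto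
    qed
  qed
  have tree': "is_tree V' E'" using tree_mod[OF O(1) fV' val' cards img lift reach] .
  have PV': "P \<subseteq> V'" using O(3) s(2) unfolding V'_def by blast
  have le: "tree_cost E \<le> tree_cost E'" using O(4)[OF PV' tree'] .
  have "tree_cost E' + tree_cost R = tree_cost E + tree_cost A"
    unfolding E'_def by (rule cost_replace[OF T(3) fA RE disj])
  moreover have "tree_cost R = (\<Sum>n\<in>N. dist s n)" unfolding R using cost_star[OF fN sN] .
  moreover have "tree_cost A = (\<Sum>n\<in>N. dist x n)" unfolding A_def using cost_star[OF fN xN] .
  ultimately show ?thesis using le unfolding N_def by linarith
qed


lemma split_ineq:
  fixes P V :: "'a::euclidean_space set"
  assumes opt: "optimal_steiner_tree P V E" and s: "s \<in> V"
    and a: "a \<in> nbrs E s" and c: "c \<in> nbrs E s" and ac: "a \<noteq> c" and p: "p \<notin> V"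
  shows "dist s a + dist s c \<le> dist p a + dist p c + dist p s"
proof -
  note O = opt_facts[OF opt]
  note T = tree_facts[OF O(1)]
  have NV: "nbrs E s \<subseteq> V - {s}" using nbrs_sub[OF T(2) s] .
  have aV: "a \<in> V" "a \<noteq> s" and cV: "c \<in> V" "c \<noteq> s" using a c NV by auto
  have pd: "p \<noteq> a" "p \<noteq> c" "p \<noteq> s" using p aV cV s by auto
  define R where "R = {{s, a}, {s, c}}"
  define A where "A = {{p, a}, {p, c}, {p, s}}"
  define E' where "E' = (E - R) \<union> A"
  define V' where "V' = insert p V"
  have EV: "e \<subseteq> V" if "e \<in> E" for e using valid_subV[OF T(2) that] .
  have RE: "R \<subseteq> E" unfolding R_def using a c by (auto simp: nbrs_def)
  have fA: "finite A" unfolding A_def by simp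
  have disj: "(E - R) \<inter> A = {}"
  proof -
    have "p \<in> e" if "e \<in> A" for e using that unfolding A_def by auto
    moreover have "p \<notin> e" if "e \<in> E" for e using EV[OF that] p by blast
    ultimately show ?thesis by blast
  qed
  have val': "valid_edges V' E'"
    unfolding valid_edges_def
  proof
    fix e assume "e \<in> E'"
    then consider "e \<in> E - R" | "e \<in> A" unfolding E'_def by blast
    then show "\<exists>u v. u \<noteq> v \<and> u \<in> V' \<and> v \<in> V' \<and> e = {u, v}"
    proof cases
      case 1
      then have "\<exists>u v. u \<noteq> v \<and> u \<in> V \<and> v \<in> V \<and> e = {u, v}" using valid_obt[OF T(2)] by blast
      then obtain u v where uv: "u \<noteq> v" "u \<in> V" "v \<in> V" "e = {u, v}" by blast
      then have "u \<in> V'" "v \<in> V'" unfolding V'_def by auto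
      then show ?thesis using uv by (intro exI[of _ u] exI[of _ v]) simp
    next
      case 2
      then consider "e = {p, a}" | "e = {p, c}" | "e = {p, s}" unfolding A_def by blast
      then show ?thesis
      proof cases
        case 1 then show ?thesis using pd aV unfolding V'_def by (intro exI[of _ p] exI[of _ a]) simp
      next
        case 2 then show ?thesis using pd cV unfolding V'_def by (intro exI[of _ p] exI[of _ c]) simp
      next
        case 3 then show ?thesis using pd s unfolding V'_def by (intro exI[of _ p] exI[of _ s]) simp
      qed
    qed
  qed
  have fV': "finite V'" unfolding V'_def using T(1) by simp
  have cR: "card R = 2" unfolding R_def using ac by (simp add: doubleton_eq_iff)
  have cA: "card A = 3" unfolding A_def using ac pd aV cV by (simp add: doubleton_eq_iff)
  have fR: "finite R" unfolding R_def by simp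
  have cER: "card (E - R) + card R = card E"
    using card_Diff_subset[OF fR RE] card_mono[OF T(3) RE] by simp
  have cE': "card E' = card (E - R) + card A"
    unfolding E'_def using disj fA T(3) by (simp add: card_Un_disjoint)
  have cV': "card V' = card V + 1" unfolding V'_def using T(1) p by simp
  have cards: "card E' + card V = card E + card V'" using cER cE' cR cA cV' by simp
  have img: "id ` V \<subseteq> V'" unfolding V'_def by auto
  have adjs: "adj E' s p" "adj E' p a" "adj E' p c"
    unfolding adj_def E'_def A_def by (auto simp: insert_commute)
  have sa: "(adj E')\<^sup>*\<^sup>* s a" using adjs by (meson rtranclp.rtrancl_into_rtrancl r_into_rtranclp)
  have sc: "(adj E')\<^sup>*\<^sup>* s c" using adjs by (meson rtranclp.rtrancl_into_rtrancl r_into_rtranclp)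
  have lift: "\<forall>y z. {y, z} \<in> E \<longrightarrow> (adj E')\<^sup>*\<^sup>* (id y) (id z)"
  proof (intro allI impI)
    fix y z assume yz: "{y, z} \<in> E"
    show "(adj E')\<^sup>*\<^sup>* (id y) (id z)"
    proof (cases "{y, z} \<in> R")
      case True
      then consider "y = s" "z = a" | "y = a" "z = s" | "y = s" "z = c" | "y = c" "z = s"
        unfolding R_def by (auto simp: doubleton_eq_iff)
      then show ?thesis using sa sc rtc_sym by cases auto
    next
      case False
      then have "adj E' y z" using yz unfolding adj_def E'_def by simp
      then show ?thesis by simp
    qed
  qed
  have reach: "\<forall>v\<in>V'. \<exists>y\<in>V. (adj E')\<^sup>*\<^sup>* (id y) v"
  proof
    fix v assume "v \<in> V'"
    then consider "v = p" | "v \<in> V" unfolding V'_def by blast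
    then show "\<exists>y\<in>V. (adj E')\<^sup>*\<^sup>* (id y) v"
    proof cases
      case 1 then show ?thesis using s adjs by (intro bexI[of _ s]) auto
    next
      case 2 then show ?thesis by (intro bexI[of _ v]) auto
    qed
  qed
  have tree': "is_tree V' E'" using tree_mod[OF O(1) fV' val' cards img lift reach] .
  have PV': "P \<subseteq> V'" using O(3) unfolding V'_def by blast
  have le: "tree_cost E \<le> tree_cost E'" using O(4)[OF PV' tree'] .
  have "tree_cost E' + tree_cost R = tree_cost E + tree_cost A"
    unfolding E'_def by (rule cost_replace[OF T(3) fA RE disj])
  moreover have "tree_cost R = dist s a + dist s c"
    unfolding R_def tree_cost_def using ac by (simp add: doubleton_eq_iff edge_len_eq)
  moreover have "tree_cost A = dist p a + dist p c + dist p s"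
    unfolding A_def tree_cost_def using ac pd aV cV by (simp add: doubleton_eq_iff edge_len_eq)
  ultimately show ?thesis using le by linarith
qed


lemma swap_ineq:
  fixes P V :: "'a::euclidean_space set"
  assumes opt: "optimal_steiner_tree P V E"
    and s1: "s1 \<in> V" "s1 \<notin> P" and s2: "s2 \<in> V" "s2 \<notin> P"
    and N1: "nbrs E s1 = {s2, a, b}" and N2: "nbrs E s2 = {s1, c, d}"
    and dist6: "distinct [s1, s2, a, b, c, d]"
    and p: "p \<notin> V" and q: "q \<notin> V" and pq: "p \<noteq> q"
  shows "dist s1 a + dist s1 b + dist s1 s2 + dist s2 c + dist s2 d
         \<le> dist p a + dist p c + dist p q + dist q b + dist q d"
proof -
  note O = opt_facts[OF opt]
  note T = tree_facts[OF O(1)]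
  have NV1: "nbrs E s1 \<subseteq> V - {s1}" using nbrs_sub[OF T(2) s1(1)] .
  have NV2: "nbrs E s2 \<subseteq> V - {s2}" using nbrs_sub[OF T(2) s2(1)] .
  have inV: "a \<in> V" "b \<in> V" "c \<in> V" "d \<in> V" using NV1 NV2 N1 N2 by auto
  have pd: "p \<noteq> a" "p \<noteq> b" "p \<noteq> c" "p \<noteq> d" "p \<noteq> s1" "p \<noteq> s2"
    using p inV s1 s2 by auto
  have qd: "q \<noteq> a" "q \<noteq> b" "q \<noteq> c" "q \<noteq> d" "q \<noteq> s1" "q \<noteq> s2"
    using q inV s1 s2 by auto
  have dd: "s1 \<noteq> s2" "s1 \<noteq> a" "s1 \<noteq> b" "s1 \<noteq> c" "s1 \<noteq> d" "s2 \<noteq> a" "s2 \<noteq> b" "s2 \<noteq> c"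
    "s2 \<noteq> d" "a \<noteq> b" "a \<noteq> c" "a \<noteq> d" "b \<noteq> c" "b \<noteq> d" "c \<noteq> d"
    using dist6 by auto
  define R where "R = {{s1, s2}, {s1, a}, {s1, b}, {s2, c}, {s2, d}}"
  define A where "A = {{p, a}, {p, c}, {p, q}, {q, b}, {q, d}}"
  define E' where "E' = (E - R) \<union> A"
  define V' where "V' = insert p (insert q (V - {s1, s2}))"
  define f where "f = (\<lambda>y. if y = s1 then p else if y = s2 then q else y)"
  have EV: "e \<subseteq> V" if "e \<in> E" for e using valid_subV[OF T(2) that] .
  have R1: "{e \<in> E. s1 \<in> e} = {{s1, s2}, {s1, a}, {s1, b}}"
    using star_edges[OF T(2), of s1] N1 by simp
  have R2: "{e \<in> E. s2 \<in> e} = {{s2, s1}, {s2, c}, {s2, d}}"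
    using star_edges[OF T(2), of s2] N2 by simp
  have Rdef: "R = {e \<in> E. s1 \<in> e \<or> s2 \<in> e}"
  proof -
    have "{e \<in> E. s1 \<in> e \<or> s2 \<in> e} = {e \<in> E. s1 \<in> e} \<union> {e \<in> E. s2 \<in> e}" by blast
    also have "\<dots> = R" unfolding R1 R2 R_def by (auto simp: insert_commute)
    finally show ?thesis by simp
  qed
  have RE: "R \<subseteq> E" unfolding Rdef by blast
  have fA: "finite A" unfolding A_def by simp
  have disj: "(E - R) \<inter> A = {}"
  proof -
    have "p \<in> e \<or> q \<in> e" if "e \<in> A" for e using that unfolding A_def by auto
    moreover have "p \<notin> e" "q \<notin> e" if "e \<in> E" for e using EV[OF that] p q by blast+
    ultimately show ?thesis by blast
  qed
  have val': "valid_edges V' E'"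
    unfolding valid_edges_def
  proof
    fix e assume "e \<in> E'"
    then consider "e \<in> E - R" | "e \<in> A" unfolding E'_def by blast
    then show "\<exists>u v. u \<noteq> v \<and> u \<in> V' \<and> v \<in> V' \<and> e = {u, v}"
    proof cases
      case 1
      then have "\<exists>u v. u \<noteq> v \<and> u \<in> V \<and> v \<in> V \<and> e = {u, v}" using valid_obt[OF T(2)] by blast
      then obtain u v where uv: "u \<noteq> v" "u \<in> V" "v \<in> V" "e = {u, v}" by blast
      have "s1 \<notin> e" "s2 \<notin> e" using 1 unfolding Rdef by blast+
      then have "u \<in> V'" "v \<in> V'" using uv unfolding V'_def by auto
      then show ?thesis using uv by (intro exI[of _ u] exI[of _ v]) simp
    next
      case 2
      have V'm: "p \<in> V'" "q \<in> V'" "a \<in> V'" "b \<in> V'" "c \<in> V'" "d \<in> V'"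
        unfolding V'_def using inV dd by auto
      from 2 consider "e = {p, a}" | "e = {p, c}" | "e = {p, q}" | "e = {q, b}" | "e = {q, d}"
        unfolding A_def by blast
      then show ?thesis
      proof cases
        case 1 then show ?thesis using pd V'm by (intro exI[of _ p] exI[of _ a]) simp
      next
        case 2 then show ?thesis using pd V'm by (intro exI[of _ p] exI[of _ c]) simp
      next
        case 3 then show ?thesis using pq V'm by (intro exI[of _ p] exI[of _ q]) simp
      next
        case 4 then show ?thesis using qd V'm by (intro exI[of _ q] exI[of _ b]) simp
      next
        case 5 then show ?thesis using qd V'm by (intro exI[of _ q] exI[of _ d]) simp
      qed
    qed
  qed
  have fV': "finite V'" unfolding V'_def using T(1) by simp
  have cR: "card R = 5" unfolding R_def using dd by (simp add: doubleton_eq_iff)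
  have cA: "card A = 5" unfolding A_def using pd qd pq dd by (simp add: doubleton_eq_iff)
  have fR: "finite R" unfolding R_def by simp
  have cER: "card (E - R) + card R = card E"
    using card_Diff_subset[OF fR RE] card_mono[OF T(3) RE] by simp
  have cE': "card E' = card (E - R) + card A"
    unfolding E'_def using disj fA T(3) by (simp add: card_Un_disjoint)
  have cV': "card V' = card V"
  proof -
    have "card (V - {s1, s2}) + 2 = card V"
    proof -
      have "{s1, s2} \<subseteq> V" using s1 s2 by simp
      then have "card (V - {s1, s2}) = card V - card {s1, s2}" using T(1) by (simp add: card_Diff_subset)
      moreover have "card {s1, s2} = 2" using dd by simp
      moreover have "card {s1, s2} \<le> card V" using \<open>{s1, s2} \<subseteq> V\<close> T(1) by (rule card_mono[rotated])
      ultimately show ?thesis by simp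
    qed
    moreover have "card V' = card (V - {s1, s2}) + 2" unfolding V'_def using T(1) p q pq by simp
    ultimately show ?thesis by simp
  qed
  have cards: "card E' + card V = card E + card V'" using cER cE' cR cA cV' by simp
  have img: "f ` V \<subseteq> V'" unfolding f_def V'_def by auto
  have fv: "f s1 = p" "f s2 = q" "f a = a" "f b = b" "f c = c" "f d = d"
    unfolding f_def using dd by auto
  have adjs: "adj E' p a" "adj E' p c" "adj E' p q" "adj E' q b" "adj E' q d"
    unfolding adj_def E'_def A_def by auto
  have pa: "(adj E')\<^sup>*\<^sup>* p a" "(adj E')\<^sup>*\<^sup>* p q" "(adj E')\<^sup>*\<^sup>* q d"
    using adjs by auto
  have pb: "(adj E')\<^sup>*\<^sup>* p b" using adjs by (meson rtranclp.rtrancl_into_rtrancl r_into_rtranclp)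
  have qc: "(adj E')\<^sup>*\<^sup>* q c"
  proof -
    have "adj E' q p" using adjs(3) adj_sym by metis
    then show ?thesis using adjs(2) by (meson rtranclp.rtrancl_into_rtrancl r_into_rtranclp)
  qed
  have lift: "\<forall>y z. {y, z} \<in> E \<longrightarrow> (adj E')\<^sup>*\<^sup>* (f y) (f z)"
  proof (intro allI impI)
    fix y z assume yz: "{y, z} \<in> E"
    show "(adj E')\<^sup>*\<^sup>* (f y) (f z)"
    proof (cases "{y, z} \<in> R")
      case True
      then consider "y = s1" "z = s2" | "y = s2" "z = s1" | "y = s1" "z = a" | "y = a" "z = s1"
        | "y = s1" "z = b" | "y = b" "z = s1" | "y = s2" "z = c" | "y = c" "z = s2"
        | "y = s2" "z = d" | "y = d" "z = s2"
        unfolding R_def by (auto simp: doubleton_eq_iff)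
      then show ?thesis using pa pb qc rtc_sym fv by cases auto
    next
      case False
      then have "s1 \<notin> {y, z}" "s2 \<notin> {y, z}" using yz unfolding Rdef by blast+
      then have "f y = y" "f z = z" unfolding f_def by auto
      moreover have "adj E' y z" using yz False unfolding adj_def E'_def by simp
      ultimately show ?thesis by simp
    qed
  qed
  have reach: "\<forall>v\<in>V'. \<exists>y\<in>V. (adj E')\<^sup>*\<^sup>* (f y) v"
  proof
    fix v assume "v \<in> V'"
    then consider "v = p" | "v = q" | "v \<in> V - {s1, s2}" unfolding V'_def by blast
    then show "\<exists>y\<in>V. (adj E')\<^sup>*\<^sup>* (f y) v"
    proof cases
      case 1 then show ?thesis using s1 fv by (intro bexI[of _ s1]) auto
    next
      case 2 then show ?thesis using s2 fv by (intro bexI[of _ s2]) auto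
    next
      case 3 then show ?thesis unfolding f_def by (intro bexI[of _ v]) auto
    qed
  qed
  have tree': "is_tree V' E'" using tree_mod[OF O(1) fV' val' cards img lift reach] .
  have PV': "P \<subseteq> V'" using O(3) s1(2) s2(2) unfolding V'_def by blast
  have le: "tree_cost E \<le> tree_cost E'" using O(4)[OF PV' tree'] .
  have "tree_cost E' + tree_cost R = tree_cost E + tree_cost A"
    unfolding E'_def by (rule cost_replace[OF T(3) fA RE disj])
  moreover have "tree_cost R = dist s1 s2 + dist s1 a + dist s1 b + dist s2 c + dist s2 d"
    unfolding R_def tree_cost_def using dd by (simp add: doubleton_eq_iff edge_len_eq)
  moreover have "tree_cost A = dist p a + dist p c + dist p q + dist q b + dist q d"
    unfolding A_def tree_cost_def using pd qd pq dd by (simp add: doubleton_eq_iff edge_len_eq)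
  ultimately show ?thesis using le by linarith
qed


lemma norm_bound:
  fixes x y :: "'a::real_inner"
  assumes "x \<noteq> 0"
  shows "norm (x + y) \<le> norm x + inner x y / norm x + inner y y / (2 * norm x)"
proof -
  have nx: "norm x > 0" using assms by simp
  have sq: "(norm (x + y))\<^sup>2 = (norm x)\<^sup>2 + 2 * inner x y + inner y y"
    by (simp add: power2_norm_eq_inner inner_add_left inner_add_right inner_commute)
  have "2 * norm x * norm (x + y) \<le> (norm x)\<^sup>2 + (norm (x + y))\<^sup>2"
    using sum_squares_bound[of "norm x" "norm (x + y)"] by (simp add: power2_eq_square mult.assoc)
  then have "2 * norm x * norm (x + y) \<le> 2 * (norm x)\<^sup>2 + 2 * inner x y + inner y y"
    using sq by simp
  then have "norm (x + y) \<le> (2 * (norm x)\<^sup>2 + 2 * inner x y + inner y y) / (2 * norm x)"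
    using nx by (simp add: field_simps)
  also have "\<dots> = norm x + inner x y / norm x + inner y y / (2 * norm x)"
    using nx by (simp add: field_simps power2_eq_square)
  finally show ?thesis .
qed

lemma avoid_finite:
  fixes a b :: real
  assumes "finite S" "a < b"
  shows "\<exists>t. a < t \<and> t < b \<and> t \<notin> S"
proof -
  have "infinite {a<..<b}" using assms(2) by simp
  then have "{a<..<b} - S \<noteq> {}" using assms(1)
    by (metis Diff_eq_empty_iff finite_subset)
  then show ?thesis by auto
qed

lemma bad_finite:
  fixes s h :: "'a::real_vector"
  assumes "finite V" "h \<noteq> 0"
  shows "finite {t::real. s + t *\<^sub>R h \<in> V}"
proof -
  have "inj (\<lambda>t::real. s + t *\<^sub>R h)"
    by (rule injI) (use assms(2) in simp)
  then have "finite ((\<lambda>t::real. s + t *\<^sub>R h) -` V)" using assms(1) by (rule finite_vimageI[rotated])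
  then show ?thesis by (simp add: vimage_def)
qed

lemma dist_step:
  fixes s n h :: "'a::real_inner"
  assumes "s \<noteq> n" "t \<ge> 0"
  shows "dist (s + t *\<^sub>R h) n \<le> dist s n + t * inner ((1 / dist s n) *\<^sub>R (s - n)) h
           + t\<^sup>2 * (inner h h / (2 * dist s n))"
proof -
  have x0: "s - n \<noteq> 0" using assms by simp
  have "dist (s + t *\<^sub>R h) n = norm ((s - n) + t *\<^sub>R h)" by (simp add: dist_norm algebra_simps)
  also have "\<dots> \<le> norm (s - n) + inner (s - n) (t *\<^sub>R h) / norm (s - n)
      + inner (t *\<^sub>R h) (t *\<^sub>R h) / (2 * norm (s - n))"
    by (rule norm_bound[OF x0])
  also have "\<dots> = dist s n + t * inner ((1 / dist s n) *\<^sub>R (s - n)) h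
           + t\<^sup>2 * (inner h h / (2 * dist s n))"
    unfolding inner_scaleR_left inner_scaleR_right by (simp add: dist_norm power2_eq_square field_simps)
  finally show ?thesis .
qed

lemma sum3: "(\<Sum>n\<in>N. a n + t * b n + u * c n) = sum a N + t * sum b N + u * (sum c N :: real)"
  by (simp add: sum.distrib sum_distrib_left)

lemma grad_zero:
  fixes s :: "'a::real_inner"
  assumes fN: "finite N" and sN: "s \<notin> N" and fV: "finite V"
    and mn: "\<And>x. x \<notin> V \<Longrightarrow> (\<Sum>n\<in>N. dist s n) \<le> (\<Sum>n\<in>N. dist x n)"
  shows "(\<Sum>n\<in>N. (1 / dist s n) *\<^sub>R (s - n)) = 0"
proof (rule ccontr)
  define G where "G = (\<Sum>n\<in>N. (1 / dist s n) *\<^sub>R (s - n))"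
  assume "G \<noteq> 0"
  then have h0: "- G \<noteq> 0" by simp
  define K where "K = (\<Sum>n\<in>N. inner (-G) (-G) / (2 * dist s n))"
  have K0: "K \<ge> 0" unfolding K_def by (intro sum_nonneg) simp
  have gpos: "inner G G > 0" using \<open>G \<noteq> 0\<close> by simp
  have key: "inner G G \<le> t * K" if t: "t > 0" "s + t *\<^sub>R (- G) \<notin> V" for t
  proof -
    have "(\<Sum>n\<in>N. dist s n) \<le> (\<Sum>n\<in>N. dist (s + t *\<^sub>R (- G)) n)" using mn[OF t(2)] .
    also have "\<dots> \<le> (\<Sum>n\<in>N. dist s n + t * inner ((1 / dist s n) *\<^sub>R (s - n)) (- G)
           + t\<^sup>2 * (inner (- G) (- G) / (2 * dist s n)))"
      by (rule sum_mono, rule dist_step) (use sN t in auto)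
    also have "\<dots> = (\<Sum>n\<in>N. dist s n) + t * inner G (- G) + t\<^sup>2 * K"
      unfolding sum3 G_def K_def inner_sum_left by simp
    finally have "0 \<le> t * inner G (- G) + t\<^sup>2 * K" by simp
    then have "t * inner G G \<le> t * (t * K)" by (simp add: power2_eq_square)
    then show ?thesis using t(1) by simp
  qed
  have "finite {t::real. s + t *\<^sub>R (- G) \<in> V}" using bad_finite[OF fV h0] .
  moreover have "(0::real) < inner G G / (K + 1)" using gpos K0 by simp
  ultimately obtain t where t: "0 < t" "t < inner G G / (K + 1)" "t \<notin> {t::real. s + t *\<^sub>R (- G) \<in> V}"
    using avoid_finite by blast
  have "inner G G \<le> t * K" using key t by simp
  also have "\<dots> \<le> t * (K + 1)" using t(1) by simp
  also have "\<dots> < inner G G" using t(2) K0 by (simp add: field_simps)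
  finally show False by simp
qed


lemma unit_norm:
  fixes s a :: "'a::real_normed_vector"
  assumes "s \<noteq> a"
  shows "norm ((1 / dist s a) *\<^sub>R (s - a)) = 1"
  using assms by (simp add: dist_norm)

lemma split_contra:
  fixes s a c :: "'a::real_inner"
  assumes fV: "finite V" and as: "a \<noteq> s" and cs: "c \<noteq> s"
    and mn: "\<And>p. p \<notin> V \<Longrightarrow> dist s a + dist s c \<le> dist p a + dist p c + dist p s"
    and ang: "inner ((1 / dist s a) *\<^sub>R (s - a)) ((1 / dist s c) *\<^sub>R (s - c)) > - 1 / 2"
  shows False
proof -
  define ga where "ga = (1 / dist s a) *\<^sub>R (s - a)"
  define gc where "gc = (1 / dist s c) *\<^sub>R (s - c)"
  define w where "w = ga + gc"
  have na: "inner ga ga = 1" using unit_norm[of s a] as unfolding ga_def by (simp add: dot_square_norm)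
  have nc: "inner gc gc = 1" using unit_norm[of s c] cs unfolding gc_def by (simp add: dot_square_norm)
  have ww: "inner w w = 2 + 2 * inner ga gc"
    unfolding w_def using na nc by (simp add: inner_add_left inner_add_right inner_commute)
  have ww1: "inner w w > 1" using ww ang unfolding ga_def gc_def by simp
  define nw where "nw = norm w"
  have nw2: "nw * nw = inner w w" unfolding nw_def by (simp add: dot_square_norm power2_eq_square)
  have nw1: "nw > 1"
  proof (rule ccontr)
    assume "\<not> nw > 1"
    then have "nw * nw \<le> 1 * 1" using nw_def by (intro mult_mono) auto
    then show False using nw2 ww1 by simp
  qed
  have w0: "- w \<noteq> 0" using nw1 unfolding nw_def by auto
  define K where "K = inner w w / (2 * dist s a) + inner w w / (2 * dist s c)"
  have K0: "K \<ge> 0" unfolding K_def by simp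
  have key: "nw * nw - nw \<le> t * K" if t: "t > 0" "s + t *\<^sub>R (- w) \<notin> V" for t
  proof -
    let ?p = "s + t *\<^sub>R (- w)"
    have "dist s a + dist s c \<le> dist ?p a + dist ?p c + dist ?p s" using mn[OF t(2)] .
    moreover have "dist ?p a \<le> dist s a + t * inner ga (- w) + t\<^sup>2 * (inner (- w) (- w) / (2 * dist s a))"
      unfolding ga_def by (rule dist_step) (use as t in auto)
    moreover have "dist ?p c \<le> dist s c + t * inner gc (- w) + t\<^sup>2 * (inner (- w) (- w) / (2 * dist s c))"
      unfolding gc_def by (rule dist_step) (use cs t in auto)
    moreover have "dist ?p s = t * nw" unfolding nw_def using t(1) by (simp add: dist_norm)
    moreover have "inner ga (- w) + inner gc (- w) = - (nw * nw)"
      using nw2 unfolding w_def by (simp add: inner_add_left inner_add_right inner_diff_right inner_minus_right algebra_simps)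
    ultimately have "0 \<le> t * (- (nw * nw)) + t\<^sup>2 * K + t * nw"
      unfolding K_def by (simp add: algebra_simps)
    then have "t * (nw * nw - nw) \<le> t * (t * K)" by (simp add: algebra_simps power2_eq_square)
    then show ?thesis using t(1) by simp
  qed
  have "nw * nw - nw = nw * (nw - 1)" by (simp add: algebra_simps)
  then have "nw * nw - nw > 0" using nw1 by simp
  then have pos: "(0::real) < (nw * nw - nw) / (K + 1)" using K0 by simp
  obtain t where t: "0 < t" "t < (nw * nw - nw) / (K + 1)" "t \<notin> {t::real. s + t *\<^sub>R (- w) \<in> V}"
    using avoid_finite[OF bad_finite[OF fV w0] pos] by blast
  have "nw * nw - nw \<le> t * K" using key t by simp
  also have "\<dots> \<le> t * (K + 1)" using t(1) by simp
  also have "\<dots> < nw * nw - nw" using t(2) K0 by (simp add: field_simps)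
  finally show False by simp
qed

lemma pair_exists:
  fixes g :: "'b \<Rightarrow> 'a::real_inner"
  assumes fN: "finite N" and c4: "card N \<ge> 4" and un: "\<And>n. n \<in> N \<Longrightarrow> norm (g n) = 1"
    and s0: "sum g N = 0"
  shows "\<exists>a\<in>N. \<exists>c\<in>N. a \<noteq> c \<and> inner (g a) (g c) > - 1 / 2"
proof (rule ccontr)
  assume "\<not> ?thesis"
  then have le: "inner (g a) (g c) \<le> - 1 / 2" if "a \<in> N" "c \<in> N" "a \<noteq> c" for a c
    using that by force
  define k where "k = card N"
  have inner_a: "(\<Sum>c\<in>N. inner (g c) (g a)) \<le> 1 - (real k - 1) / 2" if a: "a \<in> N" for a
  proof -
    have "(\<Sum>c\<in>N. inner (g c) (g a)) = inner (g a) (g a) + (\<Sum>c\<in>N - {a}. inner (g c) (g a))"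
      using sum.remove[OF fN a] by simp
    also have "inner (g a) (g a) = 1" using un[OF a] by (simp add: dot_square_norm)
    also have "(\<Sum>c\<in>N - {a}. inner (g c) (g a)) \<le> real (card (N - {a})) * (- 1 / 2)"
      using sum_bounded_above[of "N - {a}" "\<lambda>c. inner (g c) (g a)" "- 1 / 2"] le a by (auto simp: inner_commute)
    also have "real (card (N - {a})) = real k - 1" unfolding k_def using card.remove[OF fN a]
      by simp
    finally show ?thesis by simp
  qed
  have "0 = inner (sum g N) (sum g N)" using s0 by simp
  also have "\<dots> = (\<Sum>a\<in>N. \<Sum>c\<in>N. inner (g c) (g a))" by (simp only: inner_sum_left inner_sum_right)
  also have "\<dots> \<le> (\<Sum>a\<in>N. 1 - (real k - 1) / 2)" by (rule sum_mono) (rule inner_a)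
  also have "\<dots> = real k * (1 - (real k - 1) / 2)" unfolding k_def by simp
  also have "\<dots> < 0"
  proof -
    have "real k \<ge> 4" using c4 unfolding k_def by simp
    then show ?thesis by (simp add: mult_pos_neg)
  qed
  finally show False by simp
qed

lemma seg_lemma:
  fixes s a b :: "'a::real_normed_vector"
  assumes as: "s \<noteq> a" and bs: "s \<noteq> b"
    and eq: "(1 / dist s a) *\<^sub>R (s - a) + (1 / dist s b) *\<^sub>R (s - b) = 0"
  shows "a \<noteq> b" "s \<in> open_segment a b"
proof -
  define \<alpha> where "\<alpha> = dist s a"
  define \<beta> where "\<beta> = dist s b"
  have ap: "\<alpha> > 0" and bp: "\<beta> > 0" using as bs unfolding \<alpha>_def \<beta>_def by auto
  have e2: "\<beta> *\<^sub>R (s - a) + \<alpha> *\<^sub>R (s - b) = 0"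
  proof -
    have "(\<alpha> * \<beta>) *\<^sub>R ((1 / \<alpha>) *\<^sub>R (s - a) + (1 / \<beta>) *\<^sub>R (s - b)) = 0"
      using eq unfolding \<alpha>_def \<beta>_def by simp
    then show ?thesis using ap bp by (simp add: scaleR_add_right)
  qed
  then have e3: "(\<alpha> + \<beta>) *\<^sub>R s = \<beta> *\<^sub>R a + \<alpha> *\<^sub>R b" by (simp add: algebra_simps)
  show "a \<noteq> b"
  proof
    assume "a = b"
    then have "(\<alpha> + \<beta>) *\<^sub>R (s - a) = 0" using e2 by (simp add: algebra_simps)
    then show False using ap bp as by simp
  qed
  define u where "u = \<alpha> / (\<alpha> + \<beta>)"
  have u: "0 < u" "u < 1" unfolding u_def using ap bp by (auto simp: field_simps)
  have "s = (1 / (\<alpha> + \<beta>)) *\<^sub>R ((\<alpha> + \<beta>) *\<^sub>R s)" using ap bp by simp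
  also have "\<dots> = (1 - u) *\<^sub>R a + u *\<^sub>R b"
    unfolding e3 u_def using ap bp by (simp add: algebra_simps field_simps scaleR_add_right)
  finally have "s = (1 - u) *\<^sub>R a + u *\<^sub>R b" .
  then show "s \<in> open_segment a b" unfolding in_segment using u \<open>a \<noteq> b\<close> by blast
qed


lemma norm3:
  fixes x y z :: "'a::real_inner"
  assumes "inner x x = 1" "inner y y = 1" "inner z z = 1"
  shows "(norm (c1 *\<^sub>R x + c2 *\<^sub>R y + c3 *\<^sub>R z))\<^sup>2 = c1\<^sup>2 + c2\<^sup>2 + c3\<^sup>2 + 2*c1*c2*inner x y
           + 2*c1*c3*inner x z + 2*c2*c3*inner y z"
  unfolding power2_norm_eq_inner
  using assms by (simp add: inner_add_left inner_add_right inner_commute power2_eq_square algebra_simps)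

lemma swap_quad:
  fixes r L l t0 :: real
  assumes r: "r > 0"
  defines "t0 \<equiv> (4*r*L - 4*L - l) / (6*r)"
  shows "16*r\<^sup>2*L*t - 4*(4*L+l)*r*t - 12*r\<^sup>2*t\<^sup>2 - 3*l\<^sup>2
       = ((4*r*L - 4*L - l)\<^sup>2/3 - 3*l\<^sup>2) - 12*r\<^sup>2*(t - t0)\<^sup>2"
  unfolding t0_def using r by (simp add: field_simps power2_eq_square)

lemma dist_trunc:
  fixes s e a :: "'a::real_normed_vector"
  assumes "a = s + la *\<^sub>R e" "norm e = 1" "L \<le> la"
  shows "dist (s + L *\<^sub>R e) a = la - L"
proof -
  have "(s + L *\<^sub>R e) - a = (L - la) *\<^sub>R e" using assms(1) by (simp add: algebra_simps)
  then have "dist (s + L *\<^sub>R e) a = \<bar>L - la\<bar> * norm e" by (simp add: dist_norm)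
  then show ?thesis using assms(2,3) by simp
qed

lemma swap_geom:
  fixes s1 s2 a b c d :: "'a::real_inner"
  assumes fV: "finite V"
    and ne: "s1 \<noteq> s2" "a \<noteq> s1" "b \<noteq> s1" "c \<noteq> s2" "d \<noteq> s2"
    and g1: "(1 / dist s1 a) *\<^sub>R (s1 - a) + (1 / dist s1 b) *\<^sub>R (s1 - b) + (1 / dist s1 s2) *\<^sub>R (s1 - s2) = 0"
    and g2: "(1 / dist s2 c) *\<^sub>R (s2 - c) + (1 / dist s2 d) *\<^sub>R (s2 - d) + (1 / dist s2 s1) *\<^sub>R (s2 - s1) = 0"
    and L: "0 < L" "L \<le> dist s1 a" "L \<le> dist s1 b" "L \<le> dist s2 c" "L \<le> dist s2 d"
    and kap: "inner ((1 / dist s1 a) *\<^sub>R (a - s1)) ((1 / dist s2 c) *\<^sub>R (c - s2)) \<ge> - 1 / 4"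
    and sw: "\<And>p q. p \<notin> V \<Longrightarrow> q \<notin> V \<Longrightarrow> p \<noteq> q \<Longrightarrow>
        dist s1 a + dist s1 b + dist s1 s2 + dist s2 c + dist s2 d
         \<le> dist p a + dist p c + dist p q + dist q b + dist q d"
    and short: "dist s1 s2 < (sqrt 6 / 2 - 1) * L"
  shows False
proof -
  define l where "l = dist s1 s2"
  define la where "la = dist s1 a"
  define lb where "lb = dist s1 b"
  define lc where "lc = dist s2 c"
  define ld where "ld = dist s2 d"
  have pos: "l > 0" "la > 0" "lb > 0" "lc > 0" "ld > 0"
    using ne unfolding l_def la_def lb_def lc_def ld_def by auto
  define u where "u = (1 / l) *\<^sub>R (s2 - s1)"
  define ea where "ea = (1 / la) *\<^sub>R (a - s1)"
  define eb where "eb = (1 / lb) *\<^sub>R (b - s1)"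
  define ec where "ec = (1 / lc) *\<^sub>R (c - s2)"
  define ed where "ed = (1 / ld) *\<^sub>R (d - s2)"
  have pa: "a = s1 + la *\<^sub>R ea" using pos unfolding ea_def by simp
  have pb: "b = s1 + lb *\<^sub>R eb" using pos unfolding eb_def by simp
  have pc: "c = s2 + lc *\<^sub>R ec" using pos unfolding ec_def by simp
  have pd: "d = s2 + ld *\<^sub>R ed" using pos unfolding ed_def by simp
  have ps2: "s2 = s1 + l *\<^sub>R u" using pos unfolding u_def by simp
  have nu: "inner u u = 1" "inner ea ea = 1" "inner eb eb = 1" "inner ec ec = 1" "inner ed ed = 1"
    using pos unfolding u_def ea_def eb_def ec_def ed_def l_def la_def lb_def lc_def ld_def
    by (simp_all add: dot_square_norm dist_norm norm_minus_commute)
  have sumb: "eb = - u - ea"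
  proof -
    have "- ea - eb - u = 0" using g1 unfolding ea_def eb_def u_def la_def lb_def l_def
      by (simp add: algebra_simps dist_commute)
    moreover have "eb = - u - ea - (- ea - eb - u)" by (simp add: algebra_simps)
    ultimately show ?thesis by simp
  qed
  have sumd: "ed = u - ec"
  proof -
    have "- ec - ed + u = 0" using g2 unfolding ec_def ed_def u_def lc_def ld_def l_def
      by (simp add: algebra_simps dist_commute)
    moreover have "ed = u - ec - (- ec - ed + u)" by (simp add: algebra_simps)
    ultimately show ?thesis by simp
  qed
  have uea: "inner u ea = - 1 / 2"
  proof -
    have "inner eb eb = inner u u + 2 * inner u ea + inner ea ea"
      unfolding sumb by (simp add: inner_diff_left inner_diff_right inner_commute algebra_simps)
    then show ?thesis using nu by simp
  qed
  have uec: "inner u ec = 1 / 2"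
  proof -
    have "inner ed ed = inner u u - 2 * inner u ec + inner ec ec"
      unfolding sumd by (simp add: inner_diff_left inner_diff_right inner_commute algebra_simps)
    then show ?thesis using nu by simp
  qed
  define \<kappa> where "\<kappa> = inner ea ec"
  have k4: "\<kappa> \<ge> - 1 / 4" using kap unfolding \<kappa>_def ea_def ec_def la_def lc_def .
  define w where "w = ea + ec"
  define r where "r = norm w"
  have r2: "r\<^sup>2 = 2 + 2 * \<kappa>"
    unfolding r_def w_def power2_norm_eq_inner \<kappa>_def using nu
    by (simp add: inner_add_left inner_add_right inner_commute)
  have r0: "r \<ge> 0" unfolding r_def by simp
  have rle: "r \<le> 2"
  proof -
    have "r \<le> norm ea + norm ec" unfolding r_def w_def by (rule norm_triangle_ineq)
    moreover have "norm ea = 1" "norm ec = 1" using nu by (simp_all add: norm_eq_1)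
    ultimately show ?thesis by simp
  qed
  have s6: "sqrt 6 / 2 \<le> r"
  proof -
    have "(sqrt 6 / 2)\<^sup>2 = 3 / 2" by (simp add: power_divide)
    then have "(sqrt 6 / 2)\<^sup>2 \<le> r\<^sup>2" using r2 k4 by simp
    then show ?thesis using r0 by (rule power2_le_imp_le)
  qed
  have "sqrt (6::real) > 0" by simp
  then have rpos: "r > 0" using s6 by linarith
  have key: "r * L > L + l"
  proof -
    have "L + l < (sqrt 6 / 2) * L" using short unfolding l_def by (simp add: algebra_simps)
    also have "\<dots> \<le> r * L" using s6 L(1) by (simp add: mult_right_mono)
    finally show ?thesis .
  qed
  define M where "M = 4*r*L - 4*L - l"
  define t0 where "t0 = M / (6*r)"
  define f0 where "f0 = M\<^sup>2/3 - 3*l\<^sup>2"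
  have M3: "M > 3 * l" unfolding M_def using key by simp
  have t0pos: "t0 > 0" unfolding t0_def using M3 pos(1) rpos by simp
  have f0pos: "f0 > 0"
  proof -
    have "(3 * l)\<^sup>2 < M\<^sup>2" using M3 pos(1) by (intro power_strict_mono) auto
    then show ?thesis unfolding f0_def by (simp add: power_mult_distrib)
  qed
  define \<delta> where "\<delta> = min 1 (min t0 (f0 / (24 * r\<^sup>2)))"
  have dpos: "\<delta> > 0" unfolding \<delta>_def using t0pos f0pos rpos by simp
  have w0: "w \<noteq> 0" "- w \<noteq> 0" using rpos unfolding r_def by auto
  define m where "m = s1 + (l / 2) *\<^sub>R u"
  define Bad where "Bad = {t::real. m + t *\<^sub>R w \<in> V} \<union> {t::real. m + t *\<^sub>R (- w) \<in> V}"
  have fBad: "finite Bad" unfolding Bad_def using bad_finite[OF fV w0(1)] bad_finite[OF fV w0(2)] by simp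
  obtain t where t: "t0 - \<delta> < t" "t < t0" "t \<notin> Bad"
    using avoid_finite[OF fBad, of "t0 - \<delta>" t0] dpos by auto
  have tpos: "t > 0" using t(1) unfolding \<delta>_def by linarith
  have tt: "(t - t0)\<^sup>2 < \<delta>"
  proof -
    have "\<bar>t - t0\<bar> < \<delta>" using t by simp
    moreover have "\<delta> \<le> 1" unfolding \<delta>_def by simp
    ultimately have "\<bar>t - t0\<bar> * \<bar>t - t0\<bar> < \<delta> * 1"
      by (intro mult_strict_mono') auto
    then show ?thesis by (simp add: power2_eq_square abs_mult_self_eq)
  qed
  have fpos: "16*r\<^sup>2*L*t - 4*(4*L+l)*r*t - 12*r\<^sup>2*t\<^sup>2 - 3*l\<^sup>2 > 0"
  proof -
    have "16*r\<^sup>2*L*t - 4*(4*L+l)*r*t - 12*r\<^sup>2*t\<^sup>2 - 3*l\<^sup>2 = f0 - 12*r\<^sup>2*(t - t0)\<^sup>2"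
      unfolding f0_def t0_def M_def by (rule swap_quad[OF rpos])
    moreover have "12*r\<^sup>2*(t - t0)\<^sup>2 \<le> 12*r\<^sup>2*\<delta>" using tt rpos by simp
    moreover have "12*r\<^sup>2*\<delta> \<le> f0 / 2"
    proof -
      have "\<delta> \<le> f0 / (24 * r\<^sup>2)" unfolding \<delta>_def by simp
      then show ?thesis using rpos by (simp add: field_simps)
    qed
    ultimately show ?thesis using f0pos by linarith
  qed
  define RHS where "RHS = 4*L + l - 2*t*r"
  have RHSpos: "RHS > 0"
  proof -
    have "2*t*r < 2*t0*r" using t(2) rpos by simp
    also have "2*t0*r = M / 3" unfolding t0_def using rpos by simp
    also have "M / 3 \<le> 4*L"
    proof -
      have "r*L \<le> 2*L" using rle L(1) by (simp add: mult_right_mono)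
      moreover have "4*r*L = 4*(r*L)" by simp
      ultimately have "M \<le> 12 * L" unfolding M_def using pos(1) L(1) by linarith
      then show ?thesis by simp
    qed
    finally have "2*t*r < 4*L" .
    then show ?thesis unfolding RHS_def using pos(1) by linarith
  qed
  define Q where "Q = l\<^sup>2/4 + l*L/2 + L\<^sup>2 + r\<^sup>2*t\<^sup>2 - r\<^sup>2*L*t"
  have QR: "16 * Q < RHS\<^sup>2"
  proof -
    have "RHS\<^sup>2 - 16 * Q = 16*r\<^sup>2*L*t - 4*(4*L+l)*r*t - 12*r\<^sup>2*t\<^sup>2 - 3*l\<^sup>2"
      unfolding RHS_def Q_def by (simp add: power2_eq_square algebra_simps)
    then show ?thesis using fpos by simp
  qed
  have nbound: "4 * norm x < RHS" if "(norm x)\<^sup>2 = Q" for x :: 'a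
  proof -
    have "(4 * norm x)\<^sup>2 < RHS\<^sup>2" using QR that by (simp add: power_mult_distrib)
    moreover have "0 \<le> RHS" using RHSpos by simp
    ultimately show ?thesis by (rule power2_less_imp_less)
  qed
  define p where "p = m + t *\<^sub>R w"
  define q where "q = m + t *\<^sub>R (- w)"
  have tb1: "m + t *\<^sub>R w \<notin> V" using t(3) unfolding Bad_def by simp
  have tb2: "m + t *\<^sub>R (- w) \<notin> V" using t(3) unfolding Bad_def by simp
  have pV: "p \<notin> V" using tb1 unfolding p_def .
  have qV: "q \<notin> V" using tb2 unfolding q_def .
  have pmq: "p - q = (2 * t) *\<^sub>R w"
  proof -
    have "(2*t) *\<^sub>R w = t *\<^sub>R w + t *\<^sub>R w" by (simp only: mult_2 scaleR_left_distrib)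
    moreover have "p - q = t *\<^sub>R w + t *\<^sub>R w" unfolding p_def q_def by (simp add: algebra_simps)
    ultimately show ?thesis by simp
  qed
  have pq: "p \<noteq> q"
  proof
    assume "p = q"
    then have "(2 * t) *\<^sub>R w = 0" using pmq by simp
    then show False using tpos w0 by simp
  qed
  have Qeq: "Q = l\<^sup>2/4 + l*L/2 + L\<^sup>2 + (2 + 2*\<kappa>)*t\<^sup>2 - (2 + 2*\<kappa>)*L*t"
    unfolding Q_def r2 ..
  define A where "A = s1 + L *\<^sub>R ea"
  define B where "B = s1 + L *\<^sub>R eb"
  define C where "C = s2 + L *\<^sub>R ec"
  define D where "D = s2 + L *\<^sub>R ed"
  have s2m: "s2 = m + (l/2) *\<^sub>R u"
  proof -
    have "(l/2) *\<^sub>R u + (l/2) *\<^sub>R u = (l/2 + l/2) *\<^sub>R u" by (simp only: scaleR_left_distrib)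
    then have "(l/2) *\<^sub>R u + (l/2) *\<^sub>R u = l *\<^sub>R u" by simp
    then show ?thesis unfolding m_def ps2 by (simp add: add.assoc)
  qed
  have vA: "p - A = (l/2) *\<^sub>R u + (t - L) *\<^sub>R ea + t *\<^sub>R ec"
    unfolding p_def A_def m_def w_def by (simp add: algebra_simps)
  have vC: "p - C = (- l/2) *\<^sub>R u + t *\<^sub>R ea + (t - L) *\<^sub>R ec"
    unfolding p_def C_def w_def s2m by (simp add: algebra_simps)
  have vB: "q - B = (l/2 + L) *\<^sub>R u + (L - t) *\<^sub>R ea + (- t) *\<^sub>R ec"
    unfolding q_def B_def m_def w_def sumb by (simp add: algebra_simps)
  have vD: "q - D = (- l/2 - L) *\<^sub>R u + (- t) *\<^sub>R ea + (L - t) *\<^sub>R ec"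
    unfolding q_def D_def w_def sumd s2m by (simp add: algebra_simps)
  note N3 = norm3[OF nu(1) nu(2) nu(4)]
  have nA: "(norm (p - A))\<^sup>2 = Q" unfolding vA N3 uea uec \<kappa>_def[symmetric] Qeq
    by (simp add: power2_eq_square algebra_simps)
  have nC: "(norm (p - C))\<^sup>2 = Q" unfolding vC N3 uea uec \<kappa>_def[symmetric] Qeq
    by (simp add: power2_eq_square algebra_simps)
  have nB: "(norm (q - B))\<^sup>2 = Q" unfolding vB N3 uea uec \<kappa>_def[symmetric] Qeq
    by (simp add: power2_eq_square algebra_simps)
  have nD: "(norm (q - D))\<^sup>2 = Q" unfolding vD N3 uea uec \<kappa>_def[symmetric] Qeq
    by (simp add: power2_eq_square algebra_simps)
  have dA: "dist A a = la - L" unfolding A_def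
    by (rule dist_trunc[OF pa]) (use nu(2) L(2) in \<open>simp_all add: norm_eq_1 la_def\<close>)
  have dB: "dist B b = lb - L" unfolding B_def
    by (rule dist_trunc[OF pb]) (use nu(3) L(3) in \<open>simp_all add: norm_eq_1 lb_def\<close>)
  have dC: "dist C c = lc - L" unfolding C_def
    by (rule dist_trunc[OF pc]) (use nu(4) L(4) in \<open>simp_all add: norm_eq_1 lc_def\<close>)
  have dD: "dist D d = ld - L" unfolding D_def
    by (rule dist_trunc[OF pd]) (use nu(5) L(5) in \<open>simp_all add: norm_eq_1 ld_def\<close>)
  have dpq: "dist p q = 2 * t * r"
  proof -
    from pmq show ?thesis unfolding r_def using tpos by (simp add: dist_norm)
  qed
  have "dist p a \<le> dist p A + dist A a" by (rule dist_triangle)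
  moreover have "dist p c \<le> dist p C + dist C c" by (rule dist_triangle)
  moreover have "dist q b \<le> dist q B + dist B b" by (rule dist_triangle)
  moreover have "dist q d \<le> dist q D + dist D d" by (rule dist_triangle)
  moreover have "4 * dist p A < RHS" "4 * dist p C < RHS" "4 * dist q B < RHS" "4 * dist q D < RHS"
    using nbound nA nB nC nD by (simp_all add: dist_norm)
  ultimately have "dist p a + dist p c + dist p q + dist q b + dist q d
      < la + lb + l + lc + ld"
    using dA dB dC dD dpq unfolding RHS_def by linarith
  moreover have "la + lb + l + lc + ld \<le> dist p a + dist p c + dist p q + dist q b + dist q d"
    using sw[OF pV qV pq] unfolding la_def lb_def l_def lc_def ld_def .
  ultimately show False by simp
qed


lemma grad_opt:
  fixes P V :: "'a::euclidean_space set"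
  assumes opt: "optimal_steiner_tree P V E" and s: "s \<in> V" "s \<notin> P"
  shows "(\<Sum>n\<in>nbrs E s. (1 / dist s n) *\<^sub>R (s - n)) = 0"
proof -
  note O = opt_facts[OF opt]
  note T = tree_facts[OF O(1)]
  have NV: "nbrs E s \<subseteq> V - {s}" using nbrs_sub[OF T(2) s(1)] .
  have fN: "finite (nbrs E s)" using NV T(1) by (meson finite_Diff finite_subset)
  have sN: "s \<notin> nbrs E s" using NV by blast
  show ?thesis
    by (rule grad_zero[OF fN sN T(1)]) (rule move_ineq[OF opt s])
qed

lemma deg3:
  fixes P V :: "'a::euclidean_space set"
  assumes opt: "optimal_steiner_tree P V E" and s: "s \<in> V" "s \<notin> P" and ne: "nbrs E s \<noteq> {}"
  shows "card (nbrs E s) = 3"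
proof -
  note O = opt_facts[OF opt]
  note T = tree_facts[OF O(1)]
  define N where "N = nbrs E s"
  have NV: "N \<subseteq> V - {s}" unfolding N_def using nbrs_sub[OF T(2) s(1)] .
  have fN: "finite N" using NV T(1) by (meson finite_Diff finite_subset)
  have G: "(\<Sum>n\<in>N. (1 / dist s n) *\<^sub>R (s - n)) = 0" unfolding N_def by (rule grad_opt[OF opt s])
  have c0: "card N \<noteq> 0" using ne fN unfolding N_def by simp
  have c1: "card N \<noteq> 1"
  proof
    assume "card N = 1"
    then obtain a where a: "N = {a}" by (auto simp: card_Suc_eq)
    then have "a \<noteq> s" using NV by blast
    moreover have "(1 / dist s a) *\<^sub>R (s - a) = 0" using G a by simp
    ultimately show False by simp
  qed
  have c2: "card N \<noteq> 2"
  proof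
    assume "card N = 2"
    then obtain a b where ab: "N = {a, b}" "a \<noteq> b" by (auto simp: card_2_iff)
    then have as: "s \<noteq> a" and bs: "s \<noteq> b" using NV by auto
    have "(1 / dist s a) *\<^sub>R (s - a) + (1 / dist s b) *\<^sub>R (s - b) = 0" using G ab by simp
    then have "s \<in> open_segment a b" by (rule seg_lemma(2)[OF as bs])
    then have "trivial_steiner_point P V E s"
      unfolding trivial_steiner_point_def using s ab N_def by blast
    then show False using O(5) by blast
  qed
  have c4: "\<not> card N \<ge> 4"
  proof
    assume "card N \<ge> 4"
    moreover have "\<And>n. n \<in> N \<Longrightarrow> norm ((1 / dist s n) *\<^sub>R (s - n)) = 1"
      using NV by (intro unit_norm) auto
    ultimately obtain a c where ac: "a \<in> N" "c \<in> N" "a \<noteq> c"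
      "inner ((1 / dist s a) *\<^sub>R (s - a)) ((1 / dist s c) *\<^sub>R (s - c)) > - 1 / 2"
      using pair_exists[OF fN, of "\<lambda>n. (1 / dist s n) *\<^sub>R (s - n)"] G by blast
    have as: "a \<noteq> s" and cs: "c \<noteq> s" using ac NV by auto
    have "\<And>p. p \<notin> V \<Longrightarrow> dist s a + dist s c \<le> dist p a + dist p c + dist p s"
      using split_ineq[OF opt s(1)] ac unfolding N_def by blast
    then show False using split_contra[OF T(1) as cs _ ac(4)] by blast
  qed
  show ?thesis using c0 c1 c2 c4 unfolding N_def by linarith
qed

lemma edge_ne: "valid_edges V E \<Longrightarrow> {x, y} \<in> E \<Longrightarrow> x \<noteq> y"
  using adj_valid[of V E x y] by (simp add: adj_def)

lemma no_triangle:
  assumes t: "is_tree V E" and xy: "{x, y} \<in> E" and xz: "{x, z} \<in> E" and yz: "{y, z} \<in> E"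
  shows False
proof -
  note T = tree_facts[OF t]
  have d: "x \<noteq> y" "x \<noteq> z" "y \<noteq> z" using edge_ne[OF T(2)] xy xz yz by blast+
  define E' where "E' = E - {{x, y}}"
  have a1: "adj E' x z" using xz d unfolding E'_def adj_def by (auto simp: doubleton_eq_iff)
  have a2: "adj E' z y" using yz d unfolding E'_def adj_def by (auto simp: doubleton_eq_iff insert_commute)
  have pxy: "(adj E')\<^sup>*\<^sup>* x y" using a1 a2 by (meson rtranclp.rtrancl_into_rtrancl r_into_rtranclp)
  have conn: "graph_connected V E" using t unfolding tree_iff by blast
  have lift: "\<forall>u w. {u, w} \<in> E \<longrightarrow> (adj E')\<^sup>*\<^sup>* (id u) (id w)"
  proof (intro allI impI)
    fix u w assume uw: "{u, w} \<in> E"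
    show "(adj E')\<^sup>*\<^sup>* (id u) (id w)"
    proof (cases "{u, w} = {x, y}")
      case True
      then have "(u = x \<and> w = y) \<or> (u = y \<and> w = x)" by (auto simp: doubleton_eq_iff)
      then show ?thesis using pxy rtc_sym by auto
    next
      case False
      then have "adj E' u w" using uw unfolding E'_def adj_def by simp
      then show ?thesis by simp
    qed
  qed
  have reach: "\<forall>v\<in>V. \<exists>u\<in>V. (adj E')\<^sup>*\<^sup>* (id u) v" by auto
  have "graph_connected V E'" using conn_map[OF conn lift reach] .
  moreover have "\<not> graph_connected V (E - {{x, y}})" using t xy unfolding is_tree_def by blast
  ultimately show False unfolding E'_def by simp
qed

lemma kap_sum:
  fixes s1 s2 a b c d :: "'a::real_inner"
  assumes ne: "s1 \<noteq> s2" "a \<noteq> s1" "b \<noteq> s1" "c \<noteq> s2" "d \<noteq> s2"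
    and g1: "(1 / dist s1 a) *\<^sub>R (s1 - a) + (1 / dist s1 b) *\<^sub>R (s1 - b) + (1 / dist s1 s2) *\<^sub>R (s1 - s2) = 0"
    and g2: "(1 / dist s2 c) *\<^sub>R (s2 - c) + (1 / dist s2 d) *\<^sub>R (s2 - d) + (1 / dist s2 s1) *\<^sub>R (s2 - s1) = 0"
  shows "inner ((1 / dist s1 a) *\<^sub>R (a - s1)) ((1 / dist s2 c) *\<^sub>R (c - s2))
       + inner ((1 / dist s1 a) *\<^sub>R (a - s1)) ((1 / dist s2 d) *\<^sub>R (d - s2)) = - 1 / 2"
proof -
  define l where "l = dist s1 s2"
  define la where "la = dist s1 a"
  define lb where "lb = dist s1 b"
  define lc where "lc = dist s2 c"
  define ld where "ld = dist s2 d"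
  have pos: "l > 0" "la > 0" "lb > 0" "lc > 0" "ld > 0"
    using ne unfolding l_def la_def lb_def lc_def ld_def by auto
  define u where "u = (1 / l) *\<^sub>R (s2 - s1)"
  define ea where "ea = (1 / la) *\<^sub>R (a - s1)"
  define eb where "eb = (1 / lb) *\<^sub>R (b - s1)"
  define ec where "ec = (1 / lc) *\<^sub>R (c - s2)"
  define ed where "ed = (1 / ld) *\<^sub>R (d - s2)"
  have nu: "inner u u = 1" "inner ea ea = 1" "inner eb eb = 1" "inner ec ec = 1" "inner ed ed = 1"
    using pos unfolding u_def ea_def eb_def ec_def ed_def l_def la_def lb_def lc_def ld_def
    by (simp_all add: dot_square_norm dist_norm norm_minus_commute)
  have sumb: "eb = - u - ea"
  proof -
    have "- ea - eb - u = 0" using g1 unfolding ea_def eb_def u_def la_def lb_def l_def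
      by (simp add: algebra_simps dist_commute)
    moreover have "eb = - u - ea - (- ea - eb - u)" by (simp add: algebra_simps)
    ultimately show ?thesis by simp
  qed
  have sumd: "ed = u - ec"
  proof -
    have "- ec - ed + u = 0" using g2 unfolding ec_def ed_def u_def lc_def ld_def l_def
      by (simp add: algebra_simps dist_commute)
    moreover have "ed = u - ec - (- ec - ed + u)" by (simp add: algebra_simps)
    ultimately show ?thesis by simp
  qed
  have uea: "inner u ea = - 1 / 2"
  proof -
    have "inner eb eb = inner u u + 2 * inner u ea + inner ea ea"
      unfolding sumb by (simp add: inner_diff_left inner_diff_right inner_commute algebra_simps)
    then show ?thesis using nu by simp
  qed
  have "inner ea ec + inner ea ed = inner ea u"
    unfolding sumd by (simp add: inner_diff_right)
  then show ?thesis using uea unfolding ea_def ec_def ed_def la_def lc_def ld_def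
    by (simp add: inner_commute)
qed


theorem mainTheorem1:
  fixes P V :: "'a::euclidean_space set" and E :: "'a set set" and s1 s2 :: 'a
  assumes "DIM('a) \<ge> 3"
    and "optimal_steiner_tree P V E"
    and "s1 \<in> V - P" and "s2 \<in> V - P"
    and "{s1, s2} \<in> E"
  shows "dist s1 s2 \<ge> (sqrt 6 / 2 - 1) *
           Min {dist s v | s v. s \<in> {s1, s2} \<and> v \<in> nbrs E s - {s1, s2}}"
proof (rule ccontr)
  note opt = assms(2)
  note O = opt_facts[OF opt]
  note T = tree_facts[OF O(1)]
  have s1V: "s1 \<in> V" "s1 \<notin> P" and s2V: "s2 \<in> V" "s2 \<notin> P" using assms(3,4) by auto
  have e12: "{s1, s2} \<in> E" by (rule assms(5))
  have d12: "s1 \<noteq> s2" using edge_ne[OF T(2) e12] .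
  have s2N: "s2 \<in> nbrs E s1" using e12 by (simp add: nbrs_def)
  have s1N: "s1 \<in> nbrs E s2" using e12 by (simp add: nbrs_def insert_commute)
  have fN1: "finite (nbrs E s1)" and fN2: "finite (nbrs E s2)"
    using nbrs_sub[OF T(2) s1V(1)] nbrs_sub[OF T(2) s2V(1)] T(1) by (meson finite_Diff finite_subset)+
  have c1: "card (nbrs E s1) = 3" using deg3[OF opt s1V] s2N by blast
  have c2: "card (nbrs E s2) = 3" using deg3[OF opt s2V] s1N by blast
  have "card (nbrs E s1 - {s2}) = 2" using c1 s2N fN1 by simp
  then obtain a b where ab: "nbrs E s1 - {s2} = {a, b}" "a \<noteq> b" by (auto simp: card_2_iff)
  have "card (nbrs E s2 - {s1}) = 2" using c2 s1N fN2 by simp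
  then obtain c d where cd: "nbrs E s2 - {s1} = {c, d}" "c \<noteq> d" by (auto simp: card_2_iff)
  have N1: "nbrs E s1 = {s2, a, b}" using ab(1) s2N by blast
  have N2: "nbrs E s2 = {s1, c, d}" using cd(1) s1N by blast
  have NV1: "nbrs E s1 \<subseteq> V - {s1}" using nbrs_sub[OF T(2) s1V(1)] .
  have NV2: "nbrs E s2 \<subseteq> V - {s2}" using nbrs_sub[OF T(2) s2V(1)] .
  have dab: "a \<noteq> s1" "b \<noteq> s1" "a \<noteq> s2" "b \<noteq> s2" using NV1 N1 ab(1) by blast+
  have dcd: "c \<noteq> s1" "d \<noteq> s1" "c \<noteq> s2" "d \<noteq> s2" using NV2 N2 cd(1) by blast+
  have Ea: "{s1, a} \<in> E" "{s1, b} \<in> E" using N1 by (auto simp: nbrs_def)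
  have Ec: "{s2, c} \<in> E" "{s2, d} \<in> E" using N2 by (auto simp: nbrs_def)
  have tri: "x \<noteq> y" if "{s1, x} \<in> E" "{s2, y} \<in> E" for x y
  proof
    assume "x = y"
    then show False using no_triangle[OF O(1) e12, of x] that by simp
  qed
  have dx: "a \<noteq> c" "a \<noteq> d" "b \<noteq> c" "b \<noteq> d" using tri Ea Ec by blast+
  have dist6: "distinct [s1, s2, a, b, c, d]" using d12 dab dcd dx ab(2) cd(2) by auto
  have dist6': "distinct [s1, s2, a, b, d, c]" using dist6 by auto
  have N2': "nbrs E s2 = {s1, d, c}" using N2 by (simp add: insert_commute)
  have e1: "nbrs E s1 - {s1, s2} = {a, b}" using N1 dab by auto
  have e2: "nbrs E s2 - {s1, s2} = {c, d}" using N2 dcd by auto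
  have Seq: "{dist s v | s v. s \<in> {s1, s2} \<and> v \<in> nbrs E s - {s1, s2}}
      = {dist s1 a, dist s1 b, dist s2 c, dist s2 d}"
  proof
    show "{dist s v | s v. s \<in> {s1, s2} \<and> v \<in> nbrs E s - {s1, s2}}
      \<subseteq> {dist s1 a, dist s1 b, dist s2 c, dist s2 d}"
    proof
      fix z assume "z \<in> {dist s v | s v. s \<in> {s1, s2} \<and> v \<in> nbrs E s - {s1, s2}}"
      then obtain s v where sv: "z = dist s v" "s \<in> {s1, s2}" "v \<in> nbrs E s - {s1, s2}" by blast
      then consider "s = s1" "v \<in> {a, b}" | "s = s2" "v \<in> {c, d}" using e1 e2 by auto
      then show "z \<in> {dist s1 a, dist s1 b, dist s2 c, dist s2 d}" using sv(1) by cases auto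
    qed
    show "{dist s1 a, dist s1 b, dist s2 c, dist s2 d}
      \<subseteq> {dist s v | s v. s \<in> {s1, s2} \<and> v \<in> nbrs E s - {s1, s2}}"
      using e1 e2 by blast
  qed
  define L where "L = Min {dist s1 a, dist s1 b, dist s2 c, dist s2 d}"
  have Lle: "L \<le> dist s1 a" "L \<le> dist s1 b" "L \<le> dist s2 c" "L \<le> dist s2 d"
    unfolding L_def by simp_all
  have Lpos: "L > 0"
  proof -
    have "L \<in> {dist s1 a, dist s1 b, dist s2 c, dist s2 d}" unfolding L_def by (rule Min_in) simp_all
    then show ?thesis using dab dcd by auto
  qed
  assume "\<not> dist s1 s2 \<ge> (sqrt 6 / 2 - 1) *
           Min {dist s v | s v. s \<in> {s1, s2} \<and> v \<in> nbrs E s - {s1, s2}}"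
  then have short: "dist s1 s2 < (sqrt 6 / 2 - 1) * L" unfolding Seq L_def by simp
  have G1: "(\<Sum>n\<in>nbrs E s1. (1 / dist s1 n) *\<^sub>R (s1 - n)) = 0" by (rule grad_opt[OF opt s1V])
  have G2: "(\<Sum>n\<in>nbrs E s2. (1 / dist s2 n) *\<^sub>R (s2 - n)) = 0" by (rule grad_opt[OF opt s2V])
  have g1: "(1 / dist s1 a) *\<^sub>R (s1 - a) + (1 / dist s1 b) *\<^sub>R (s1 - b) + (1 / dist s1 s2) *\<^sub>R (s1 - s2) = 0"
    using G1 unfolding N1 using dab ab(2) by (simp add: algebra_simps)
  have g2: "(1 / dist s2 c) *\<^sub>R (s2 - c) + (1 / dist s2 d) *\<^sub>R (s2 - d) + (1 / dist s2 s1) *\<^sub>R (s2 - s1) = 0"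
    using G2 unfolding N2 using dcd cd(2) by (simp add: algebra_simps)
  have g2': "(1 / dist s2 d) *\<^sub>R (s2 - d) + (1 / dist s2 c) *\<^sub>R (s2 - c) + (1 / dist s2 s1) *\<^sub>R (s2 - s1) = 0"
    using g2 by (simp add: algebra_simps)
  have sw: "\<And>p q. p \<notin> V \<Longrightarrow> q \<notin> V \<Longrightarrow> p \<noteq> q \<Longrightarrow>
        dist s1 a + dist s1 b + dist s1 s2 + dist s2 c + dist s2 d
         \<le> dist p a + dist p c + dist p q + dist q b + dist q d"
    using swap_ineq[OF opt s1V s2V N1 N2 dist6] by blast
  have sw': "\<And>p q. p \<notin> V \<Longrightarrow> q \<notin> V \<Longrightarrow> p \<noteq> q \<Longrightarrow>
        dist s1 a + dist s1 b + dist s1 s2 + dist s2 d + dist s2 c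
         \<le> dist p a + dist p d + dist p q + dist q b + dist q c"
    using swap_ineq[OF opt s1V s2V N1 N2' dist6'] by blast
  have ne: "s1 \<noteq> s2" "a \<noteq> s1" "b \<noteq> s1" "c \<noteq> s2" "d \<noteq> s2" using d12 dab dcd by auto
  have ks: "inner ((1 / dist s1 a) *\<^sub>R (a - s1)) ((1 / dist s2 c) *\<^sub>R (c - s2))
       + inner ((1 / dist s1 a) *\<^sub>R (a - s1)) ((1 / dist s2 d) *\<^sub>R (d - s2)) = - 1 / 2"
    by (rule kap_sum[OF ne g1 g2])
  show False
  proof (cases "inner ((1 / dist s1 a) *\<^sub>R (a - s1)) ((1 / dist s2 c) *\<^sub>R (c - s2)) \<ge> - 1 / 4")
    case True
    show False
      by (rule swap_geom[OF T(1) ne g1 g2 Lpos Lle True sw short])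
  next
    case False
    then have k2: "inner ((1 / dist s1 a) *\<^sub>R (a - s1)) ((1 / dist s2 d) *\<^sub>R (d - s2)) \<ge> - 1 / 4"
      using ks by linarith
    have ne': "s1 \<noteq> s2" "a \<noteq> s1" "b \<noteq> s1" "d \<noteq> s2" "c \<noteq> s2" using ne by auto
    have Lle': "L \<le> dist s1 a" "L \<le> dist s1 b" "L \<le> dist s2 d" "L \<le> dist s2 c" using Lle by auto
    show False
      by (rule swap_geom[OF T(1) ne' g1 g2' Lpos Lle' k2 sw' short])
  qed
qed


end
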